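(* Consider problem (P): $\min_{x\in H} f(x)+g(x)+\sum_{i=1}^m h_i(B_ix)$ under the standing assumptions below. Let $w_1,\dots,w_m\in(0,1)$ with $\sum_{i=1}^m w_i=1$, let $\gamma\in(0,2/L)$ and let $\sigma,\tau>0$ satisfy $\sigma\tau<1/\sum_{i=1}^m w_i\|B_i\|^2$. Given arbitrary $x^0\in H$ and $y_i^0\in G_i$ ($i=1,\dots,m$), define for $k\ge0$ $$x^{k+1}=\operatorname{prox}_{\frac{\tau\gamma}{1+\tau}g}\Big(\frac{x^k-\tau\sum_{i=1}^m w_iB_i^*y_i^k+\tau\big(x^k-\gamma\nabla f(x^k)\big)}{1+\tau}\Big),$$ $$y_i^{k+1}=\frac{\gamma}{w_i}\operatorname{prox}_{w_i\frac{\sigma}{\gamma}h_i^*}\Big(\frac{w_i}{\gamma}\big(y_i^k+\sigma B_i(2x^{k+1}-x^k)\big)\Big),\quad i=1,\dots,m.$$ Then $\{x^k\}$ converges weakly to a solution of (P).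
   Context: Standing assumptions: $H$ and $G_1,\dots,G_m$ are real Hilbert spaces; $f:H\to\mathbb R$ is convex and differentiable with $L$-Lipschitz continuous gradient for some $L\in(0,\infty)$; $g\in\Gamma_0(H)$; $h_i\in\Gamma_0(G_i)$ and $B_i:H\to G_i$ is a bounded linear operator for each $i$; there exists $\hat x\in H$ with $0\in\nabla f(\hat x)+\partial g(\hat x)+\sum_{i=1}^m B_i^*\partial h_i(B_i\hat x)$. $\Gamma_0(X)$ is the set of proper lsc convex functions on $X$; $\operatorname{prox}_{\lambda\varphi}(u)=\arg\min_x\{\tfrac12\|x-u\|^2+\lambda\varphi(x)\}$; $\varphi^*$ is the Fenchel conjugate; $B_i^*$ is the adjoint of $B_i$ and $\|B_i\|$ its operator norm. *)

theory Defs
  imports "HOL-Analysis.Analysis"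
begin

text \<open>Extended-real-valued functions on a closed subspace S of a real Hilbert space.
  All notions are relative to the carrier S (S = UNIV for the space itself).\<close>

definition proper_on :: "'a set \<Rightarrow> ('a \<Rightarrow> ereal) \<Rightarrow> bool" where
  "proper_on S \<phi> \<longleftrightarrow> (\<forall>x\<in>S. \<phi> x \<noteq> -\<infinity>) \<and> (\<exists>x\<in>S. \<phi> x \<noteq> \<infinity>)"

definition lsc_on :: "'a::metric_space set \<Rightarrow> ('a \<Rightarrow> ereal) \<Rightarrow> bool" where
  "lsc_on S \<phi> \<longleftrightarrow> (\<forall>x\<in>S. \<forall>s. (\<forall>k. s k \<in> S) \<longrightarrow> s \<longlonglongrightarrow> x \<longrightarrow>
      \<phi> x \<le> liminf (\<lambda>k. \<phi> (s k)))"

definition convex_ereal_on :: "'a::real_vector set \<Rightarrow> ('a \<Rightarrow> ereal) \<Rightarrow> bool" where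
  "convex_ereal_on S \<phi> \<longleftrightarrow> (\<forall>x\<in>S. \<forall>y\<in>S. \<forall>t::real. 0 < t \<and> t < 1 \<longrightarrow>
      \<phi> ((1 - t) *\<^sub>R x + t *\<^sub>R y) \<le> ereal (1 - t) * \<phi> x + ereal t * \<phi> y)"

definition Gamma0_on :: "'a::real_normed_vector set \<Rightarrow> ('a \<Rightarrow> ereal) \<Rightarrow> bool" where
  "Gamma0_on S \<phi> \<longleftrightarrow> proper_on S \<phi> \<and> lsc_on S \<phi> \<and> convex_ereal_on S \<phi>"

definition prox_on :: "'a::real_normed_vector set \<Rightarrow> real \<Rightarrow> ('a \<Rightarrow> ereal) \<Rightarrow> 'a \<Rightarrow> 'a" where
  "prox_on S lam \<phi> u = (THE p. p \<in> S \<and> (\<forall>z\<in>S.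
      ereal (norm (p - u)^2 / 2) + ereal lam * \<phi> p \<le> ereal (norm (z - u)^2 / 2) + ereal lam * \<phi> z))"

definition conj_on :: "'a::real_inner set \<Rightarrow> ('a \<Rightarrow> ereal) \<Rightarrow> 'a \<Rightarrow> ereal" where
  "conj_on S \<phi> y = (SUP x\<in>S. ereal (inner x y) - \<phi> x)"

definition subdiff_on :: "'a::real_inner set \<Rightarrow> ('a \<Rightarrow> ereal) \<Rightarrow> 'a \<Rightarrow> 'a set" where
  "subdiff_on S \<phi> x = {v \<in> S. \<phi> x \<noteq> \<infinity> \<and> \<phi> x \<noteq> -\<infinity> \<and>
      (\<forall>z\<in>S. \<phi> x + ereal (inner v (z - x)) \<le> \<phi> z)}"

definition weakly_converges :: "(nat \<Rightarrow> 'a::real_inner) \<Rightarrow> 'a \<Rightarrow> bool" where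
  "weakly_converges s l \<longleftrightarrow> (\<forall>v. (\<lambda>k. inner (s k) v) \<longlonglongrightarrow> inner l v)"

end

theory Submission
  imports Defs "HOL-Library.Diagonal_Subsequence"
begin

lemma G0_not_minf: "Gamma0_on S \<phi> \<Longrightarrow> x \<in> S \<Longrightarrow> \<phi> x \<noteq> -\<infinity>"
  unfolding Gamma0_on_def proper_on_def by auto

lemma G0_proper: "Gamma0_on S \<phi> \<Longrightarrow> \<exists>x\<in>S. \<phi> x \<noteq> \<infinity>"
  unfolding Gamma0_on_def proper_on_def by auto

lemma G0_conv:
  assumes "Gamma0_on S \<phi>" "x \<in> S" "y \<in> S" "0 < t" "t < 1" "\<phi> x \<le> ereal a" "\<phi> y \<le> ereal b"
  shows "\<phi> ((1 - t) *\<^sub>R x + t *\<^sub>R y) \<le> ereal ((1 - t) * a + t * b)"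
proof -
  have "\<phi> ((1 - t) *\<^sub>R x + t *\<^sub>R y) \<le> ereal (1 - t) * \<phi> x + ereal t * \<phi> y"
    using assms unfolding Gamma0_on_def convex_ereal_on_def by auto
  also have "\<dots> \<le> ereal (1 - t) * ereal a + ereal t * ereal b"
    using assms by (intro add_mono ereal_mult_left_mono) auto
  also have "\<dots> = ereal ((1 - t) * a + t * b)" by simp
  finally show ?thesis .
qed

lemma G0_lsc:
  assumes "Gamma0_on S \<phi>" "x \<in> S" "\<And>k. s k \<in> S" "s \<longlonglongrightarrow> x"
    "\<And>k. \<phi> (s k) \<le> ereal (c k)" "c \<longlonglongrightarrow> c0"
  shows "\<phi> x \<le> ereal c0"
proof -
  have "\<phi> x \<le> liminf (\<lambda>k. \<phi> (s k))" using assms unfolding Gamma0_on_def lsc_on_def by blast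
  also have "\<dots> \<le> liminf (\<lambda>k. ereal (c k))" by (intro Liminf_mono) (use assms in auto)
  also have "\<dots> = ereal c0" using assms(6) by (intro lim_imp_Liminf tendsto_ereal) auto
  finally show ?thesis .
qed

lemma G0_lower_bound:
  fixes \<phi> :: "'a::real_normed_vector \<Rightarrow> ereal"
  assumes G: "Gamma0_on S \<phi>" and S: "convex S"
  shows "\<exists>\<alpha> \<beta>. \<beta> \<ge> 0 \<and> (\<forall>z\<in>S. ereal (\<alpha> - \<beta> * norm z) \<le> \<phi> z)"
proof -
  obtain x0 where x0: "x0 \<in> S" "\<phi> x0 \<noteq> \<infinity>" using G0_proper[OF G] by blast
  define c0 where "c0 = real_of_ereal (\<phi> x0)"
  have c0: "\<phi> x0 = ereal c0" using x0 G0_not_minf[OF G x0(1)] unfolding c0_def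
    by (cases "\<phi> x0") auto
  have "\<exists>\<delta>>0. \<forall>z\<in>S. norm (z - x0) < \<delta> \<longrightarrow> ereal (c0 - 1) \<le> \<phi> z"
  proof (rule ccontr)
    assume "\<not> ?thesis"
    then have "\<forall>n::nat. \<exists>z\<in>S. norm (z - x0) < 1 / real (Suc n) \<and> \<phi> z < ereal (c0 - 1)"
      by (metis not_le of_nat_0_less_iff zero_less_Suc divide_pos_pos zero_less_one)
    then obtain zs where zs: "\<And>n. zs n \<in> S" "\<And>n. norm (zs n - x0) < 1 / real (Suc n)"
      "\<And>n. \<phi> (zs n) < ereal (c0 - 1)" by metis
    have "(\<lambda>n. zs n - x0) \<longlonglongrightarrow> 0" using zs(2) by (rule LIMSEQ_norm_0)
    then have "(\<lambda>n. (zs n - x0) + x0) \<longlonglongrightarrow> 0 + x0" by (intro tendsto_add) auto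
    then have lim: "zs \<longlonglongrightarrow> x0" by simp
    have "\<phi> x0 \<le> ereal (c0 - 1)"
      by (rule G0_lsc[OF G x0(1) zs(1) lim, of "\<lambda>_. c0 - 1"]) (use zs(3) in \<open>auto intro: less_imp_le\<close>)
    then show False using c0 by simp
  qed
  then obtain \<delta> where d: "\<delta> > 0" "\<And>z. z \<in> S \<Longrightarrow> norm (z - x0) < \<delta> \<Longrightarrow> ereal (c0 - 1) \<le> \<phi> z"
    by blast
  define \<alpha> where "\<alpha> = c0 - 1 - 2 * norm x0 / \<delta>"
  define \<beta> where "\<beta> = 2 / \<delta>"
  have "\<forall>z\<in>S. ereal (\<alpha> - \<beta> * norm z) \<le> \<phi> z"
  proof
    fix z assume z: "z \<in> S"
    show "ereal (\<alpha> - \<beta> * norm z) \<le> \<phi> z"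
    proof (cases "\<phi> z = \<infinity>")
      case True then show ?thesis by simp
    next
      case False
      then obtain \<zeta> where zeta: "\<phi> z = ereal \<zeta>" using G0_not_minf[OF G z] by (cases "\<phi> z") auto
      have nb: "\<beta> * norm z + 2 * norm x0 / \<delta> \<ge> 0" using d(1) unfolding \<beta>_def by auto
      have tri: "norm (z - x0) \<le> norm z + norm x0" by (rule norm_triangle_ineq4)
      show ?thesis
      proof (cases "norm (z - x0) < \<delta>")
        case True
        then have "c0 - 1 \<le> \<zeta>" using d(2)[OF z] zeta by auto
        then show ?thesis using zeta nb unfolding \<alpha>_def by auto
      next
        case False
        define \<theta> where "\<theta> = \<delta> / (2 * norm (z - x0))"
        have nz: "norm (z - x0) > 0" using False d(1) by auto
        have th: "0 < \<theta>" "\<theta> < 1" using nz d(1) False unfolding \<theta>_def by (auto simp: field_simps)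
        define p where "p = (1 - \<theta>) *\<^sub>R x0 + \<theta> *\<^sub>R z"
        have pS: "p \<in> S" unfolding p_def using th by (intro convexD[OF S x0(1) z]) auto
        have "p - x0 = \<theta> *\<^sub>R (z - x0)" unfolding p_def by (simp add: algebra_simps)
        then have "norm (p - x0) = \<theta> * norm (z - x0)" using th by simp
        also have "\<dots> = \<delta> / 2" unfolding \<theta>_def using nz by (simp add: field_simps)
        finally have "norm (p - x0) < \<delta>" using d(1) by simp
        then have "ereal (c0 - 1) \<le> \<phi> p" using d(2)[OF pS] by blast
        moreover have "\<phi> p \<le> ereal ((1 - \<theta>) * c0 + \<theta> * \<zeta>)" unfolding p_def
          by (rule G0_conv[OF G x0(1) z th]) (use c0 zeta in auto)
        ultimately have "c0 - 1 \<le> (1 - \<theta>) * c0 + \<theta> * \<zeta>" by (metis ereal_less_eq(3) order_trans)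
        then have "\<theta> * c0 - 1 \<le> \<theta> * \<zeta>" by (simp add: algebra_simps)
        then have "c0 - 1 / \<theta> \<le> \<zeta>" using th by (simp add: field_simps)
        moreover have "1 / \<theta> = 2 * norm (z - x0) / \<delta>" unfolding \<theta>_def by simp
        moreover have "2 * norm (z - x0) / \<delta> \<le> 2 * (norm z + norm x0) / \<delta>"
          using tri d(1) by (simp add: divide_right_mono)
        ultimately have "c0 - 2 * (norm z + norm x0) / \<delta> \<le> \<zeta>" by linarith
        then show ?thesis using zeta unfolding \<alpha>_def \<beta>_def by (simp add: field_simps add_divide_distrib)
      qed
    qed
  qed
  moreover have "\<beta> \<ge> 0" using d(1) unfolding \<beta>_def by simp
  ultimately show ?thesis by blast
qed

lemma norm_sq_expand: "norm (a + b)^2 = norm a ^2 + 2 * inner a b + norm b^2"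
  for a b :: "'a::real_inner"
  by (simp add: power2_norm_eq_inner inner_add_left inner_add_right inner_commute)

lemma norm_sq_diff: "norm (a - b)^2 = norm a ^2 - 2 * inner a b + norm b^2"
  for a b :: "'a::real_inner"
  by (simp add: power2_norm_eq_inner inner_diff_left inner_diff_right inner_commute)

lemma par0: "inner ((1/2::real) *\<^sub>R (A + B)) ((1/2::real) *\<^sub>R (A + B)) = (inner A A + inner B B)/2 - inner (A - B) (A - B)/4"
  for A B :: "'a::real_inner"
  by (simp add: inner_add_left inner_add_right inner_diff_left inner_diff_right inner_commute field_simps)

lemma parallelogram_mid:
  fixes a b u :: "'a::real_inner"
  shows "norm ((1 - 1/2) *\<^sub>R a + (1/2) *\<^sub>R b - u)^2
     = (norm (a - u)^2 + norm (b - u)^2)/2 - norm (a - b)^2/4"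
proof -
  have e: "(1 - 1/2) *\<^sub>R a + (1/2) *\<^sub>R b - u = (1/2) *\<^sub>R ((a - u) + (b - u))"
  proof -
    have h: "(1/2::real) *\<^sub>R u + (1/2) *\<^sub>R u = u" by (simp flip: scaleR_add_left)
    have "(1/2::real) *\<^sub>R ((a - u) + (b - u)) = (1/2) *\<^sub>R a + (1/2) *\<^sub>R b - ((1/2) *\<^sub>R u + (1/2) *\<^sub>R u)"
      by (simp add: scaleR_add_right scaleR_diff_right)
    then show ?thesis unfolding h by simp
  qed
  have e2: "a - b = (a - u) - (b - u)" by simp
  show ?thesis unfolding e power2_norm_eq_inner par0 by (simp add: e2[symmetric])
qed

lemma prox_min_exists:
  fixes \<phi> :: "'a::{real_inner,complete_space} \<Rightarrow> ereal"
  assumes G: "Gamma0_on S \<phi>" and S: "convex S" "closed S" and lam: "0 < lam"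
  shows "\<exists>p\<in>S. \<phi> p \<noteq> \<infinity> \<and> (\<forall>z\<in>S. ereal (norm (p - u)^2 / 2) + ereal lam * \<phi> p
            \<le> ereal (norm (z - u)^2 / 2) + ereal lam * \<phi> z)"
proof -
  define \<psi> where "\<psi> z = real_of_ereal (\<phi> z)" for z
  define D where "D = {z\<in>S. \<phi> z \<noteq> \<infinity>}"
  define Fr where "Fr z = norm (z - u)^2 / 2 + lam * \<psi> z" for z
  have psi: "\<phi> z = ereal (\<psi> z)" if "z \<in> D" for z
    using that G0_not_minf[OF G] unfolding D_def \<psi>_def by (cases "\<phi> z") auto
  obtain \<alpha> \<beta> where ab: "\<beta> \<ge> 0" "\<And>z. z \<in> S \<Longrightarrow> ereal (\<alpha> - \<beta> * norm z) \<le> \<phi> z"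
    using G0_lower_bound[OF G S(1)] by blast
  have Dne: "D \<noteq> {}" using G0_proper[OF G] unfolding D_def by auto
  define K where "K = lam * \<alpha> + (norm u ^2 - (norm u + lam * \<beta>)^2) / 2"
  have lowb: "K \<le> Fr z" if z: "z \<in> D" for z
  proof -
    have "\<alpha> - \<beta> * norm z \<le> \<psi> z" using ab(2)[of z] psi[OF z] z unfolding D_def by auto
    then have 1: "lam * (\<alpha> - \<beta> * norm z) \<le> lam * \<psi> z" using lam by (simp add: mult_left_mono)
    have "\<bar>norm z - norm u\<bar> \<le> norm (z - u)" by (rule norm_triangle_ineq3)
    then have 2: "(norm z - norm u)^2 \<le> norm (z - u)^2"
      by (metis abs_ge_zero power2_abs power_mono)
    have 3: "(norm z - norm u)^2 / 2 - lam * \<beta> * norm z \<ge> (norm u ^2 - (norm u + lam * \<beta>)^2) / 2"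
    proof -
      have "(norm z - norm u)^2 / 2 - lam * \<beta> * norm z - (norm u ^2 - (norm u + lam * \<beta>)^2) / 2
          = (norm z - norm u - lam * \<beta>)^2 / 2" by (simp add: power2_eq_square field_simps)
      moreover have "0 \<le> (norm z - norm u - lam * \<beta>)^2 / 2" by simp
      ultimately show ?thesis by linarith
    qed
    have 3: "(norm u ^2 - (norm u + lam * \<beta>)^2) / 2 \<le> norm (z-u)^2/2 - lam*\<beta>*norm z" using 2 3 by linarith
    have 1: "lam*\<alpha> - lam*\<beta>*norm z \<le> lam*\<psi> z" using 1 by (simp add: right_diff_distrib mult.assoc)
    show ?thesis using 1 3 unfolding Fr_def K_def by linarith
  qed
  define I where "I = Inf (Fr ` D)"
  have bdd: "bdd_below (Fr ` D)" by (rule bdd_belowI2[where m=K]) (rule lowb)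
  have I_le: "I \<le> Fr z" if "z \<in> D" for z unfolding I_def using bdd that by (auto intro: cInf_lower)
  have "\<forall>n. \<exists>z\<in>D. Fr z < I + inverse (real (Suc n))"
  proof
    fix n
    have "I < I + inverse (real (Suc n))" by simp
    then show "\<exists>z\<in>D. Fr z < I + inverse (real (Suc n))"
      unfolding I_def using Dne bdd by (subst (asm) cInf_less_iff) auto
  qed
  then obtain zs where zs: "\<And>n. zs n \<in> D" "\<And>n. Fr (zs n) < I + inverse (real (Suc n))" by metis
  have mid: "norm (a - b)^2 \<le> 4 * (Fr a + Fr b - 2 * I)" if "a \<in> D" "b \<in> D" for a b
  proof -
    define c where "c = (1 - 1/2) *\<^sub>R a + (1/2::real) *\<^sub>R b"
    have cS: "c \<in> S" unfolding c_def using that unfolding D_def by (intro convexD[OF S(1)]) auto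
    have aS: "a \<in> S" "b \<in> S" using that D_def by auto
    have "\<phi> c \<le> ereal ((1 - 1/2) * \<psi> a + (1/2) * \<psi> b)"
      unfolding c_def by (rule G0_conv[OF G aS]) (simp_all add: psi that)
    then have cD: "c \<in> D" using cS unfolding D_def by auto
    have pc: "\<psi> c \<le> (1 - 1/2) * \<psi> a + (1/2) * \<psi> b" using \<open>\<phi> c \<le> _\<close> psi[OF cD] by simp
    have pm: "norm (c - u)^2 = (norm (a-u)^2 + norm(b-u)^2)/2 - norm(a-b)^2/4"
      unfolding c_def by (rule parallelogram_mid)
    have l2: "lam * \<psi> c \<le> lam * ((1-1/2)*\<psi> a + (1/2)*\<psi> b)"
      using mult_left_mono[OF pc] lam by simp
    then have l3: "lam * \<psi> c \<le> lam * \<psi> a/2 + lam * \<psi> b/2" by (simp add: algebra_simps)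
    have "I \<le> Fr c" using I_le[OF cD] .
    then show ?thesis using pm l3 unfolding Fr_def by argo
  qed
  have cauchy: "Cauchy zs"
  proof (rule metric_CauchyI)
    fix e :: real assume e: "e > 0"
    obtain N where N: "8 / e^2 < real N" using reals_Archimedean2 by blast
    have "\<forall>m\<ge>N. \<forall>n\<ge>N. dist (zs m) (zs n) < e"
    proof (intro allI impI)
      fix m n assume mn: "m \<ge> N" "n \<ge> N"
      have im: "inverse (real (Suc m)) \<le> inverse (real (Suc N))"
        using mn by (intro le_imp_inverse_le) auto
      have inn: "inverse (real (Suc n)) \<le> inverse (real (Suc N))"
        using mn by (intro le_imp_inverse_le) auto
      have "norm (zs m - zs n)^2 \<le> 4 * (Fr (zs m) + Fr (zs n) - 2 * I)" using mid zs(1) by blast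
      also have "\<dots> < 8 * inverse (real (Suc N))" using zs(2)[of m] zs(2)[of n] im inn by argo
      also have "\<dots> \<le> e^2"
      proof -
        have "8 / e^2 < real (Suc N)" using N by simp
        then have "8 < e^2 * real (Suc N)" using e by (simp add: field_simps)
        then show ?thesis using e by (simp add: field_simps)
      qed
      finally have "norm (zs m - zs n)^2 < e^2" .
      then show "dist (zs m) (zs n) < e" unfolding dist_norm using e
        by (metis power_less_imp_less_base less_imp_le)
    qed
    then show "\<exists>N. \<forall>m\<ge>N. \<forall>n\<ge>N. dist (zs m) (zs n) < e" by blast
  qed
  then obtain p where lim: "zs \<longlonglongrightarrow> p" using Cauchy_convergent convergent_def by blast
  have pS: "p \<in> S" using closed_sequentially[OF S(2)] zs(1) lim unfolding D_def by auto
  have bnd: "\<phi> (zs n) \<le> ereal ((I + inverse (real (Suc n)) - norm (zs n - u)^2/2) / lam)" for n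
  proof -
    have "lam * \<psi> (zs n) < I + inverse (real (Suc n)) - norm (zs n - u)^2/2"
      using zs(2)[of n] unfolding Fr_def by simp
    then have "\<psi> (zs n) * lam \<le> I + inverse (real (Suc n)) - norm (zs n - u)^2/2"
      by (simp add: mult.commute)
    then have "\<psi> (zs n) \<le> (I + inverse (real (Suc n)) - norm (zs n - u)^2/2) / lam"
      by (simp add: pos_le_divide_eq[OF lam])
    then show ?thesis using psi[OF zs(1)] by simp
  qed
  have climit: "(\<lambda>n. (I + inverse (real (Suc n)) - norm (zs n - u)^2/2) / lam)
      \<longlonglongrightarrow> (I + 0 - norm (p - u)^2/2) / lam"
    by (intro tendsto_intros LIMSEQ_inverse_real_of_nat lim) (use lam in auto)
  have php: "\<phi> p \<le> ereal ((I + 0 - norm (p - u)^2/2) / lam)"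
    by (rule G0_lsc[OF G pS _ lim bnd climit]) (use zs(1) D_def in auto)
  then have pD: "p \<in> D" using pS unfolding D_def by auto
  have "\<psi> p \<le> (I - norm (p - u)^2/2) / lam" using php psi[OF pD] by simp
  then have Fp: "Fr p \<le> I" unfolding Fr_def using lam by (simp add: field_simps)
  have "\<forall>z\<in>S. ereal (norm (p - u)^2 / 2) + ereal lam * \<phi> p
            \<le> ereal (norm (z - u)^2 / 2) + ereal lam * \<phi> z"
  proof
    fix z assume z: "z \<in> S"
    show "ereal (norm (p - u)^2 / 2) + ereal lam * \<phi> p \<le> ereal (norm (z - u)^2 / 2) + ereal lam * \<phi> z"
    proof (cases "\<phi> z = \<infinity>")
      case True then show ?thesis using lam psi[OF pD] by simp
    next
      case False
      then have zD: "z \<in> D" using z unfolding D_def by auto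
      have "Fr p \<le> Fr z" using Fp I_le[OF zD] by simp
      then show ?thesis using psi[OF pD] psi[OF zD] unfolding Fr_def by simp
    qed
  qed
  then show ?thesis using pS pD unfolding D_def by blast
qed

lemma prox_eqI:
  fixes \<phi> :: "'a::real_inner \<Rightarrow> ereal"
  assumes lam: "0 < lam" and pS: "p \<in> S" and pa: "\<phi> p = ereal a"
    and H: "\<And>z. z \<in> S \<Longrightarrow> ereal (a + inner (u - p) (z - p) / lam) \<le> \<phi> z"
  shows "prox_on S lam \<phi> u = p"
proof -
  define F where "F z = ereal (norm (z - u)^2 / 2) + ereal lam * \<phi> z" for z
  have Fp: "F p = ereal (norm (p - u)^2/2 + lam * a)" unfolding F_def pa by simp
  have key: "ereal (norm (p - u)^2/2 + lam * a + norm (z - p)^2/2) \<le> F z" if z: "z \<in> S" for z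
  proof (cases "\<phi> z")
    case (real b)
    have "a + inner (u - p) (z - p) / lam \<le> b" using H[OF z] real by simp
    then have 1: "lam * a + inner (u - p) (z - p) \<le> lam * b" using lam by (simp add: field_simps)
    have 2: "norm (z - u)^2 = norm (z - p)^2 + 2 * inner (z - p) (p - u) + norm (p - u)^2"
      using norm_sq_expand[of "z - p" "p - u"] by simp
    have 3: "inner (z - p) (p - u) = - inner (u - p) (z - p)"
      by (simp add: inner_diff_left inner_diff_right inner_commute)
    have "norm (p - u)^2/2 + lam * a + norm (z - p)^2/2 \<le> norm (z - u)^2 / 2 + lam * b"
      using 1 2 3 by argo
    then show ?thesis unfolding F_def using real by simp
  next
    case PInf then show ?thesis unfolding F_def using lam by simp
  next
    case MInf then show ?thesis using H[OF z] by simp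
  qed
  have P: "p \<in> S \<and> (\<forall>z\<in>S. F p \<le> F z)"
  proof (intro conjI ballI pS)
    fix z assume z: "z \<in> S"
    have "F p \<le> ereal (norm (p - u)^2/2 + lam * a + norm (z - p)^2/2)" unfolding Fp by simp
    also have "\<dots> \<le> F z" by (rule key[OF z])
    finally show "F p \<le> F z" .
  qed
  show ?thesis unfolding prox_on_def F_def[symmetric]
  proof (rule the_equality)
    show "p \<in> S \<and> (\<forall>z\<in>S. F p \<le> F z)" by (rule P)
  next
    fix q assume q: "q \<in> S \<and> (\<forall>z\<in>S. F q \<le> F z)"
    have "ereal (norm (p - u)^2/2 + lam * a + norm (q - p)^2/2) \<le> F p"
      using key[of q] q P by (meson order_trans)
    then have "norm (q - p)^2 \<le> 0" unfolding Fp by simp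
    then show "q = p" by simp
  qed
qed

lemma min_var_ineq:
  fixes \<phi> :: "'a::real_inner \<Rightarrow> ereal"
  assumes G: "Gamma0_on S \<phi>" and S: "convex S" and lam: "0 < lam" and pS: "p \<in> S"
    and pa: "\<phi> p = ereal a"
    and min: "\<And>z. z\<in>S \<Longrightarrow> ereal (norm (p - u)^2 / 2) + ereal lam * \<phi> p
               \<le> ereal (norm (z - u)^2 / 2) + ereal lam * \<phi> z"
    and zS: "z \<in> S" and zb: "\<phi> z = ereal b"
  shows "lam * a + inner (u - p) (z - p) \<le> lam * b"
proof (rule ccontr)
  assume neg: "\<not> ?thesis"
  define N where "N = norm (z - p)^2"
  define \<delta> where "\<delta> = inner (p - u) (z - p) + lam * (b - a)"
  have iu: "inner (u - p) (z - p) = - inner (p - u) (z - p)"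
    by (simp add: inner_diff_left)
  have dneg: "\<delta> < 0" using neg iu unfolding \<delta>_def by (simp add: algebra_simps)
  have N0: "N \<ge> 0" unfolding N_def by simp
  define t where "t = min (1/2) (- \<delta> / (N + 1))"
  have t0: "0 < t" "t < 1" unfolding t_def using dneg N0 by (auto simp: divide_neg_pos)
  have "t \<le> (- \<delta>) / (N + 1)" unfolding t_def by (rule min.cobounded2)
  then have tN: "t * (N + 1) \<le> - \<delta>" using N0 by (subst (asm) pos_le_divide_eq) auto
  define zt where "zt = (1 - t) *\<^sub>R p + t *\<^sub>R z"
  have ztS: "zt \<in> S" unfolding zt_def using t0 by (intro convexD[OF S pS zS]) auto
  have cz: "\<phi> zt \<le> ereal ((1 - t) * a + t * b)"
    unfolding zt_def by (rule G0_conv[OF G pS zS t0]) (simp_all add: pa zb)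
  obtain c where c: "\<phi> zt = ereal c" using cz G0_not_minf[OF G ztS] by (cases "\<phi> zt") auto
  have cle: "c \<le> (1 - t) * a + t * b" using cz c by simp
  have "norm (p - u)^2 / 2 + lam * a \<le> norm (zt - u)^2 / 2 + lam * c"
    using min[OF ztS] pa c by simp
  moreover have e: "zt - u = (p - u) + t *\<^sub>R (z - p)" unfolding zt_def by (simp add: algebra_simps)
  have "norm (zt - u)^2 = norm (p - u)^2 + 2 * (t * inner (p - u) (z - p)) + t^2 * N"
    unfolding e N_def norm_sq_expand by (simp add: power_mult_distrib)
  moreover have "lam * c \<le> lam * ((1 - t) * a + t * b)" using cle lam by (simp add: mult_left_mono)
  moreover have "lam * ((1 - t) * a + t * b) = lam * a + lam * t * (b - a)" by (simp add: algebra_simps)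
  ultimately have "0 \<le> t * inner (p - u) (z - p) + t^2 * N / 2 + lam * t * (b - a)"
    by argo
  also have "\<dots> = t * (\<delta> + t * N / 2)" unfolding \<delta>_def by (simp add: algebra_simps power2_eq_square)
  finally have "0 \<le> \<delta> + t * N / 2" using t0 by (simp add: zero_le_mult_iff)
  moreover have "t * N / 2 < t * (N + 1)" using t0 N0 by (simp add: algebra_simps add_nonneg_pos mult_nonneg_nonneg)
  ultimately show False using tN dneg by argo
qed

lemma prox_props:
  fixes \<phi> :: "'a::{real_inner,complete_space} \<Rightarrow> ereal"
  assumes G: "Gamma0_on S \<phi>" and S: "convex S" "closed S" and lam: "0 < lam"
  shows "prox_on S lam \<phi> u \<in> S \<and> (\<exists>a. \<phi> (prox_on S lam \<phi> u) = ereal a \<and>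
     (\<forall>z\<in>S. ereal (a + inner (u - prox_on S lam \<phi> u) (z - prox_on S lam \<phi> u) / lam) \<le> \<phi> z))"
proof -
  obtain p where p: "p \<in> S" "\<phi> p \<noteq> \<infinity>" and min: "\<And>z. z\<in>S \<Longrightarrow> ereal (norm (p - u)^2 / 2) + ereal lam * \<phi> p
            \<le> ereal (norm (z - u)^2 / 2) + ereal lam * \<phi> z"
    using prox_min_exists[OF G S lam, of u] by blast
  obtain a where pa: "\<phi> p = ereal a" using p G0_not_minf[OF G p(1)] by (cases "\<phi> p") auto
  have H: "ereal (a + inner (u - p) (z - p) / lam) \<le> \<phi> z" if z: "z \<in> S" for z
  proof (cases "\<phi> z")
    case (real b)
    have "lam * a + inner (u - p) (z - p) \<le> lam * b"
      by (rule min_var_ineq[OF G S(1) lam p(1) pa min z real]) auto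
    then have "a + inner (u - p) (z - p) / lam \<le> b" using lam by (simp add: field_simps)
    then show ?thesis using real by simp
  qed (use G0_not_minf[OF G z] in auto)
  have "prox_on S lam \<phi> u = p" by (rule prox_eqI[OF lam p(1) pa H])
  then show ?thesis using p(1) pa H by auto
qed

lemma prox_subdiff:
  fixes \<phi> :: "'a::{real_inner,complete_space} \<Rightarrow> ereal"
  assumes G: "Gamma0_on S \<phi>" and S: "subspace S" "closed S" and lam: "0 < lam" and u: "u \<in> S"
  shows "prox_on S lam \<phi> u \<in> S \<and> (1 / lam) *\<^sub>R (u - prox_on S lam \<phi> u) \<in> subdiff_on S \<phi> (prox_on S lam \<phi> u)"
proof -
  define p where "p = prox_on S lam \<phi> u"
  obtain a where pS: "p \<in> S" and pa: "\<phi> p = ereal a"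
    and H: "\<And>z. z\<in>S \<Longrightarrow> ereal (a + inner (u - p) (z - p) / lam) \<le> \<phi> z"
    using prox_props[OF G subspace_imp_convex[OF S(1)] S(2) lam, of u] unfolding p_def by blast
  have vS: "(1 / lam) *\<^sub>R (u - p) \<in> S" using S(1) u pS by (intro subspace_scale subspace_diff) auto
  have "(1 / lam) *\<^sub>R (u - p) \<in> subdiff_on S \<phi> p"
    unfolding subdiff_on_def using vS pa H by (auto simp: divide_inverse mult.commute)
  then show ?thesis using pS unfolding p_def by simp
qed

lemma moreau:
  fixes h :: "'a::{real_inner,complete_space} \<Rightarrow> ereal"
  assumes V: "subspace V" "closed V" and G: "Gamma0_on V h" and s: "0 < s" and r: "r \<in> V"
  shows "\<exists>p\<in>V. prox_on V s (conj_on V h) r = r - s *\<^sub>R p \<and> r - s *\<^sub>R p \<in> subdiff_on V h p"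
proof -
  define p where "p = prox_on V (1/s) h ((1/s) *\<^sub>R r)"
  have rs: "(1/s) *\<^sub>R r \<in> V" using V(1) r by (rule subspace_scale)
  have P: "p \<in> V" "(1 / (1/s)) *\<^sub>R ((1/s) *\<^sub>R r - p) \<in> subdiff_on V h p"
    using prox_subdiff[OF G V _ rs, of "1/s"] s unfolding p_def by auto
  define q where "q = r - s *\<^sub>R p"
  have eq: "(1 / (1/s)) *\<^sub>R ((1/s) *\<^sub>R r - p) = q" unfolding q_def using s
    by (simp add: algebra_simps)
  have qsub: "q \<in> subdiff_on V h p" using P(2) eq by simp
  have qV: "q \<in> V" using qsub unfolding subdiff_on_def by auto
  obtain a where ha: "h p = ereal a" using qsub unfolding subdiff_on_def by (cases "h p") auto
  have sub: "ereal a + ereal (inner q (z - p)) \<le> h z" if "z \<in> V" for z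
    using qsub that ha unfolding subdiff_on_def by auto
  have conj_q: "conj_on V h q = ereal (inner p q - a)"
    unfolding conj_on_def
  proof (rule antisym)
    show "(SUP x\<in>V. ereal (inner x q) - h x) \<le> ereal (inner p q - a)"
    proof (rule SUP_least)
      fix x assume x: "x \<in> V"
      show "ereal (inner x q) - h x \<le> ereal (inner p q - a)"
      proof (cases "h x")
        case (real b)
        have "a + inner q (x - p) \<le> b" using sub[OF x] real by simp
        then have "inner x q - b \<le> inner p q - a"
          by (simp add: inner_diff_right inner_commute)
        then show ?thesis using real by simp
      qed (use G0_not_minf[OF G x] in auto)
    qed
    have "ereal (inner p q) - h p \<le> (SUP x\<in>V. ereal (inner x q) - h x)"
      using P(1) by (rule SUP_upper)
    then show "ereal (inner p q - a) \<le> (SUP x\<in>V. ereal (inner x q) - h x)" using ha by simp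
  qed
  have conj_ge: "ereal (inner p z - a) \<le> conj_on V h z" for z
  proof -
    have "ereal (inner p z) - h p \<le> (SUP x\<in>V. ereal (inner x z) - h x)"
      using P(1) by (rule SUP_upper)
    then show ?thesis unfolding conj_on_def using ha by simp
  qed
  have "prox_on V s (conj_on V h) r = q"
  proof (rule prox_eqI[where \<phi>="conj_on V h" and p=q and a="inner p q - a" and lam=s, OF s qV conj_q])
    fix z assume z: "z \<in> V"
    have "r - q = s *\<^sub>R p" unfolding q_def by simp
    then have "inner (r - q) (z - q) / s = inner p z - inner p q"
      using s by (simp add: inner_diff_right right_diff_distrib[symmetric])
    then have "inner p q - a + inner (r - q) (z - q) / s = inner p z - a" by simp
    then show "ereal (inner p q - a + inner (r - q) (z - q) / s) \<le> conj_on V h z"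
      using conj_ge[of z] by (simp only:)
  qed
  then show ?thesis using P(1) qsub unfolding q_def by blast
qed

lemma riesz:
  fixes l :: "'a::{real_inner,complete_space} \<Rightarrow> real"
  assumes l: "bounded_linear l"
  shows "\<exists>a. \<forall>x. l x = inner a x"
proof -
  interpret l: bounded_linear l by (rule l)
  define \<phi> where "\<phi> x = ereal (- l x)" for x
  have G: "Gamma0_on UNIV \<phi>"
    unfolding Gamma0_on_def proper_on_def lsc_on_def convex_ereal_on_def
  proof (intro conjI ballI allI impI)
    fix x and s :: "nat \<Rightarrow> 'a" assume "s \<longlonglongrightarrow> x"
    then have "(\<lambda>k. - l (s k)) \<longlonglongrightarrow> - l x" by (intro tendsto_intros l.tendsto)
    then have "liminf (\<lambda>k. \<phi> (s k)) = \<phi> x" unfolding \<phi>_def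
      by (intro lim_imp_Liminf tendsto_ereal) auto
    then show "\<phi> x \<le> liminf (\<lambda>k. \<phi> (s k))" by simp
  next
    fix x y :: 'a and t :: real
    show "\<phi> ((1 - t) *\<^sub>R x + t *\<^sub>R y) \<le> ereal (1 - t) * \<phi> x + ereal t * \<phi> y"
    proof -
      have e: "l ((1 - t) *\<^sub>R x + t *\<^sub>R y) = (1 - t) * l x + t * l y" by (simp add: l.add l.scale)
      have e2: "ereal (1 - t) * ereal (- l x) + ereal t * ereal (- l y) = ereal (- ((1 - t) * l x + t * l y))"
        by (simp add: algebra_simps)
      show ?thesis unfolding \<phi>_def e e2 by simp
    qed
  qed (auto simp: \<phi>_def)
  obtain a where pa: "\<phi> (prox_on UNIV 1 \<phi> 0) = ereal a"
    and H: "\<forall>z. ereal (a + inner (0 - prox_on UNIV 1 \<phi> 0) (z - prox_on UNIV 1 \<phi> 0) / 1) \<le> \<phi> z"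
    using prox_props[OF G convex_UNIV closed_UNIV, of 1 0] by auto
  define p where "p = prox_on UNIV 1 \<phi> (0::'a)"
  have a: "a = - l p" using pa unfolding p_def \<phi>_def by simp
  have ineq: "l (z - p) \<le> inner p (z - p)" for z
    using H[rule_format, of z] unfolding p_def[symmetric] a \<phi>_def
    by (simp add: l.diff inner_diff_right)
  have "l d = inner p d" for d
    using ineq[of "p + d"] ineq[of "p - d"] by (simp add: l.diff l.add l.neg inner_diff_right)
  then show ?thesis by blast
qed

lemma adjoint_works_gen:
  fixes B :: "'a::{real_inner,complete_space} \<Rightarrow> 'b::real_inner"
  assumes B: "bounded_linear B"
  shows "inner (B x) y = inner x (adjoint B y)"
proof -
  have "\<forall>y. \<exists>a. \<forall>x. inner (B x) y = inner a x"
  proof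
    fix y
    have "bounded_linear (\<lambda>x. inner (B x) y)"
      by (rule bounded_linear_compose[OF bounded_linear_inner_left B])
    then show "\<exists>a. \<forall>x. inner (B x) y = inner a x" by (rule riesz)
  qed
  then obtain F where F: "\<And>y x. inner (B x) y = inner (F y) x" by metis
  have ex: "\<exists>f'. \<forall>x y. inner (B x) y = inner x (f' y)"
    by (rule exI[of _ F]) (metis F inner_commute)
  show ?thesis using someI_ex[OF ex] unfolding adjoint_def by blast
qed

lemma projection_exists:
  fixes M :: "'a::{real_inner,complete_space} set"
  assumes M: "subspace M" "closed M"
  shows "\<exists>p\<in>M. \<forall>y\<in>M. inner (u - p) y = 0"
proof -
  define \<phi> :: "'a \<Rightarrow> ereal" where "\<phi> x = (if x \<in> M then 0 else \<infinity>)" for x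
  have G: "Gamma0_on UNIV \<phi>"
    unfolding Gamma0_on_def proper_on_def lsc_on_def convex_ereal_on_def
  proof (intro conjI ballI allI impI)
    show "\<exists>x\<in>UNIV. \<phi> x \<noteq> \<infinity>" using subspace_0[OF M(1)] unfolding \<phi>_def by auto
  next
    fix x and s :: "nat \<Rightarrow> 'a" assume lim: "s \<longlonglongrightarrow> x"
    show "\<phi> x \<le> liminf (\<lambda>k. \<phi> (s k))"
    proof (cases "x \<in> M")
      case True then show ?thesis unfolding \<phi>_def by (intro Liminf_bounded) auto
    next
      case False
      have "open (- M)" using M(2) by auto
      then have "eventually (\<lambda>k. s k \<in> - M) sequentially"
        using lim False by (intro topological_tendstoD) auto
      then have "eventually (\<lambda>k. \<infinity> \<le> \<phi> (s k)) sequentially"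
        by eventually_elim (auto simp: \<phi>_def)
      then show ?thesis by (intro Liminf_bounded) (auto elim!: eventually_mono)
    qed
  next
    fix x y :: 'a and t :: real assume t: "0 < t \<and> t < 1"
    show "\<phi> ((1 - t) *\<^sub>R x + t *\<^sub>R y) \<le> ereal (1 - t) * \<phi> x + ereal t * \<phi> y"
    proof (cases "x \<in> M \<and> y \<in> M")
      case True
      then have "(1 - t) *\<^sub>R x + t *\<^sub>R y \<in> M" using M(1)
        by (intro subspace_add subspace_scale) auto
      then show ?thesis using True unfolding \<phi>_def by simp
    next
      case False
      then show ?thesis using t unfolding \<phi>_def by auto
    qed
  qed (auto simp: \<phi>_def)
  obtain a where pa: "\<phi> (prox_on UNIV 1 \<phi> u) = ereal a"
    and H: "\<forall>z. ereal (a + inner (u - prox_on UNIV 1 \<phi> u) (z - prox_on UNIV 1 \<phi> u) / 1) \<le> \<phi> z"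
    using prox_props[OF G convex_UNIV closed_UNIV, of 1 u] by auto
  define p where "p = prox_on UNIV 1 \<phi> u"
  have pM: "p \<in> M" and a: "a = 0" using pa unfolding p_def \<phi>_def by (auto split: if_splits)
  have ineq: "inner (u - p) (z - p) \<le> 0" if "z \<in> M" for z
    using H[rule_format, of z] that unfolding p_def[symmetric] a \<phi>_def by simp
  have "inner (u - p) y = 0" if y: "y \<in> M" for y
  proof -
    have "p + y \<in> M" "p - y \<in> M" using M(1) pM y by (auto intro: subspace_add subspace_diff)
    then show ?thesis using ineq[of "p + y"] ineq[of "p - y"] by (simp add: inner_diff_right)
  qed
  then show ?thesis using pM by blast
qed

lemma weak_limit_in_subspace:
  fixes V :: "'a::{real_inner,complete_space} set"
  assumes V: "subspace V" "closed V" and s: "\<And>k. s k \<in> V" and w: "weakly_converges s l"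
  shows "l \<in> V"
proof -
  obtain p where p: "p \<in> V" "\<And>y. y \<in> V \<Longrightarrow> inner (l - p) y = 0"
    using projection_exists[OF V, of l] by blast
  have "(\<lambda>k. inner (s k) (l - p)) \<longlonglongrightarrow> inner l (l - p)" using w unfolding weakly_converges_def by blast
  moreover have "(\<lambda>k. inner (s k) (l - p)) = (\<lambda>k. 0)" using p(2)[OF s] by (simp add: inner_commute)
  ultimately have "inner l (l - p) = 0" using LIMSEQ_const_iff by (metis)
  moreover have "inner p (l - p) = 0" using p by (simp add: inner_commute)
  ultimately have "inner (l - p) (l - p) = 0" by (simp add: inner_diff_left)
  then have "l = p" by simp
  then show ?thesis using p by simp
qed

lemma subspace_closure_gen:
  fixes S :: "'a::real_normed_vector set"
  assumes S: "subspace S" shows "subspace (closure S)"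
  unfolding subspace_def
proof (intro conjI ballI allI)
  show "0 \<in> closure S" using subspace_0[OF S] closure_subset by blast
next
  fix x y assume "x \<in> closure S" "y \<in> closure S"
  then obtain a b where a: "\<And>n. a n \<in> S" "a \<longlonglongrightarrow> x" and b: "\<And>n. b n \<in> S" "b \<longlonglongrightarrow> y"
    unfolding closure_sequential by blast
  have "(\<lambda>n. a n + b n) \<longlonglongrightarrow> x + y" using a b by (intro tendsto_add) auto
  moreover have "\<And>n. a n + b n \<in> S" using a b S by (auto intro: subspace_add)
  ultimately show "x + y \<in> closure S" unfolding closure_sequential by (intro exI[of _ "\<lambda>n. a n + b n"]) auto
next
  fix c and x assume "x \<in> closure S"
  then obtain a where a: "\<And>n. a n \<in> S" "a \<longlonglongrightarrow> x" unfolding closure_sequential by blast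
  have "(\<lambda>n. c *\<^sub>R a n) \<longlonglongrightarrow> c *\<^sub>R x" using a by (intro tendsto_scaleR) auto
  moreover have "\<And>n. c *\<^sub>R a n \<in> S" using a S by (auto intro: subspace_scale)
  ultimately show "c *\<^sub>R x \<in> closure S" unfolding closure_sequential by (intro exI[of _ "\<lambda>n. c *\<^sub>R a n"]) auto
qed

lemma weakly_converges_subseq:
  "weakly_converges s l \<Longrightarrow> strict_mono r \<Longrightarrow> weakly_converges (\<lambda>k. s (r k)) l"
  unfolding weakly_converges_def using LIMSEQ_subseq_LIMSEQ by (fastforce simp: o_def)

lemma weak_compact:
  fixes s :: "nat \<Rightarrow> 'a::{real_inner,complete_space}"
  assumes bnd: "\<And>k. norm (s k) \<le> C"
  shows "\<exists>r l. strict_mono r \<and> weakly_converges (\<lambda>k. s (r k)) l"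
proof -
  have C0: "0 \<le> C" using bnd[of 0] norm_ge_zero order_trans by blast
  have ib: "\<bar>inner (s k) y\<bar> \<le> C * norm y" for k y
    using Cauchy_Schwarz_ineq2[of "s k" y] bnd[of k] by (meson mult_right_mono norm_ge_zero order_trans)
  define P where "P j r \<longleftrightarrow> convergent (\<lambda>k. inner (s (r k)) (s j))" for j and r :: "nat \<Rightarrow> nat"
  interpret subseqs P
  proof
    fix n and \<sigma> :: "nat \<Rightarrow> nat" assume "strict_mono \<sigma>"
    have "bounded (range (\<lambda>k. inner (s (\<sigma> k)) (s n)))"
      unfolding bounded_iff using ib by (intro exI[of _ "C * norm (s n)"]) auto
    then obtain l r where r: "strict_mono r" "((\<lambda>k. inner (s (\<sigma> k)) (s n)) \<circ> r) \<longlonglongrightarrow> l"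
      using bounded_imp_convergent_subsequence by blast
    then show "\<exists>r'. strict_mono r' \<and> P n (\<sigma> \<circ> r')"
      unfolding P_def convergent_def by (auto simp: o_def)
  qed
  define r where "r = diagseq"
  have rmono: "strict_mono r" unfolding r_def by (rule subseq_diagseq)
  have conv_j: "convergent (\<lambda>k. inner (s (r k)) (s j))" for j
  proof -
    have "P j (diagseq \<circ> (+) (Suc j))"
    proof (rule diagseq_holds)
      fix r' s' :: "nat \<Rightarrow> nat" and n assume "strict_mono r'" "P n s'"
      then show "P n (s' \<circ> r')" unfolding P_def using convergent_subseq_convergent
        by (fastforce simp: o_def)
    qed
    then have "convergent (\<lambda>k. inner (s (diagseq (k + Suc j))) (s j))"
      unfolding P_def by (simp add: o_def add.commute)
    then show ?thesis unfolding r_def by (subst (asm) convergent_ignore_initial_segment)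
  qed
  define M where "M = closure (span (range s))"
  have Msub: "subspace M" unfolding M_def by (intro subspace_closure_gen subspace_span)
  have Mcl: "closed M" unfolding M_def by simp
  have sM: "s k \<in> M" for k unfolding M_def by (intro subsetD[OF closure_subset] span_base rangeI)
  have conv_span: "convergent (\<lambda>k. inner (s (r k)) y)" if "y \<in> span (range s)" for y
  proof (rule span_induct[OF that])
    show "subspace {y. convergent (\<lambda>k. inner (s (r k)) y)}"
      unfolding subspace_def
      by (auto simp: inner_add_right intro: convergent_add convergent_mult convergent_const)
    show "\<And>x. x \<in> range s \<Longrightarrow> convergent (\<lambda>k. inner (s (r k)) x)" using conv_j by auto
  qed
  have conv_M: "convergent (\<lambda>k. inner (s (r k)) y)" if y: "y \<in> M" for y
  proof -
    have "Cauchy (\<lambda>k. inner (s (r k)) y)"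
    proof (rule metric_CauchyI)
      fix e :: real assume e: "e > 0"
      have "e / (3 * (C + 1)) > 0" using e C0 by simp
      then obtain y' where y': "y' \<in> span (range s)" "dist y' y < e / (3 * (C + 1))"
        using y unfolding M_def closure_approachable by blast
      have "Cauchy (\<lambda>k. inner (s (r k)) y')" using conv_span[OF y'(1)] Cauchy_convergent_iff by blast
      then obtain N where N: "\<And>m n. m \<ge> N \<Longrightarrow> n \<ge> N \<Longrightarrow> dist (inner (s (r m)) y') (inner (s (r n)) y') < e/3"
        using e by (meson metric_CauchyD zero_less_divide_iff zero_less_numeral)
      have close: "\<bar>inner (s (r k)) y - inner (s (r k)) y'\<bar> < e/3" for k
      proof -
        have "\<bar>inner (s (r k)) y - inner (s (r k)) y'\<bar> = \<bar>inner (s (r k)) (y - y')\<bar>"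
          by (simp add: inner_diff_right)
        also have "\<dots> \<le> C * norm (y - y')" by (rule ib)
        also have "\<dots> \<le> C * (e / (3 * (C + 1)))"
          using y'(2) C0 by (intro mult_left_mono) (auto simp: dist_norm norm_minus_commute)
        also have "\<dots> < e / 3" using e C0 by (simp add: field_simps)
        finally show ?thesis .
      qed
      have "\<forall>m\<ge>N. \<forall>n\<ge>N. dist (inner (s (r m)) y) (inner (s (r n)) y) < e"
      proof (intro allI impI)
        fix m n assume "m \<ge> N" "n \<ge> N"
        then have "\<bar>inner (s (r m)) y' - inner (s (r n)) y'\<bar> < e/3" using N unfolding dist_real_def by blast
        then show "dist (inner (s (r m)) y) (inner (s (r n)) y) < e"
          using close[of m] close[of n] unfolding dist_real_def by argo
      qed
      then show "\<exists>N. \<forall>m\<ge>N. \<forall>n\<ge>N. dist (inner (s (r m)) y) (inner (s (r n)) y) < e" by blast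
    qed
    then show ?thesis using Cauchy_convergent_iff by blast
  qed
  have proj: "\<exists>p\<in>M. \<forall>z\<in>M. inner (u - p) z = 0" for u
    by (rule projection_exists[OF Msub Mcl])
  then obtain P where P: "\<And>u. P u \<in> M" "\<And>u z. z \<in> M \<Longrightarrow> inner (u - P u) z = 0" by metis
  have sP: "inner (s (r k)) y = inner (s (r k)) (P y)" for k y
  proof -
    have "inner (y - P y) (s (r k)) = 0" by (rule P(2)[OF sM])
    then have "inner y (s (r k)) - inner (P y) (s (r k)) = 0" by (simp only: inner_diff_left)
    then show ?thesis by (simp add: inner_commute)
  qed
  have sPf: "(\<lambda>k. inner (s (r k)) y) = (\<lambda>k. inner (s (r k)) (P y))" for y
    by (rule ext) (rule sP)
  have conv: "convergent (\<lambda>k. inner (s (r k)) y)" for y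
    unfolding sPf[of y] using conv_M[OF P(1)] .
  define LL where "LL y = lim (\<lambda>k. inner (s (r k)) y)" for y
  have limLL: "(\<lambda>k. inner (s (r k)) y) \<longlonglongrightarrow> LL y" for y
    using conv[of y] unfolding LL_def convergent_LIMSEQ_iff .
  have bl: "bounded_linear LL"
  proof (rule bounded_linear_intro[where K = C])
    fix x y
    have "(\<lambda>k. inner (s (r k)) (x + y)) \<longlonglongrightarrow> LL x + LL y"
      unfolding inner_add_right by (intro tendsto_add limLL)
    then show "LL (x + y) = LL x + LL y" using limLL LIMSEQ_unique by blast
  next
    fix c x
    have "(\<lambda>k. inner (s (r k)) (c *\<^sub>R x)) \<longlonglongrightarrow> c *\<^sub>R LL x"
      unfolding inner_scaleR_right real_scaleR_def by (intro tendsto_mult tendsto_const limLL)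
    then show "LL (c *\<^sub>R x) = c *\<^sub>R LL x" using limLL LIMSEQ_unique by blast
  next
    fix x
    have "(\<lambda>k. \<bar>inner (s (r k)) x\<bar>) \<longlonglongrightarrow> \<bar>LL x\<bar>" by (intro tendsto_rabs limLL)
    then have "\<bar>LL x\<bar> \<le> C * norm x" using ib by (intro Lim_bounded[where M = 0]) auto
    then show "norm (LL x) \<le> norm x * C" by (simp add: mult.commute)
  qed
  obtain a where a: "\<And>y. LL y = inner a y" using riesz[OF bl] by blast
  define l where "l = P a"
  have "weakly_converges (\<lambda>k. s (r k)) l"
    unfolding weakly_converges_def
  proof
    fix v
    have "(\<lambda>k. inner (s (r k)) v) \<longlonglongrightarrow> LL (P v)" unfolding sPf[of v] by (rule limLL)
    moreover have "LL (P v) = inner l v"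
    proof -
      have "LL (P v) = inner a (P v)" by (rule a)
      also have "\<dots> = inner l (P v)" using P(2)[OF P(1), of a] unfolding l_def by (simp add: inner_diff_left)
      also have "\<dots> = inner l v"
      proof -
        have "inner (v - P v) (P a) = 0" by (rule P(2)[OF P(1)])
        then have "inner v (P a) - inner (P v) (P a) = 0" by (simp only: inner_diff_left)
        then show ?thesis unfolding l_def by (simp add: inner_commute)
      qed
      finally show ?thesis .
    qed
    ultimately show "(\<lambda>k. inner (s (r k)) v) \<longlonglongrightarrow> inner l v" by simp
  qed
  then show ?thesis using rmono by blast
qed

lemma weak_compact_fam:
  fixes F :: "nat \<Rightarrow> nat \<Rightarrow> 'a::{real_inner,complete_space}"
  assumes "\<And>k i. i < n \<Longrightarrow> norm (F k i) \<le> C"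
  shows "\<exists>r l. strict_mono r \<and> (\<forall>i<n. weakly_converges (\<lambda>k. F (r k) i) (l i))"
  using assms
proof (induction n)
  case 0
  then show ?case by (intro exI[of _ id]) (auto simp: strict_mono_def)
next
  case (Suc n)
  then obtain r l where r: "strict_mono r" "\<forall>i<n. weakly_converges (\<lambda>k. F (r k) i) (l i)" by force
  obtain r2 l2 where r2: "strict_mono r2" "weakly_converges (\<lambda>k. F (r (r2 k)) n) l2"
    using weak_compact[of "\<lambda>k. F (r k) n" C] Suc.prems by auto
  have "strict_mono (r \<circ> r2)" using r(1) r2(1) by (rule strict_mono_o)
  moreover have "\<forall>i<Suc n. weakly_converges (\<lambda>k. F ((r \<circ> r2) k) i) ((l(n := l2)) i)"
  proof (intro allI impI)
    fix i assume "i < Suc n"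
    then show "weakly_converges (\<lambda>k. F ((r \<circ> r2) k) i) ((l(n := l2)) i)"
      using r(2) r2 weakly_converges_subseq[of "\<lambda>k. F (r k) i" "l i" r2]
      by (cases "i = n") (auto simp: o_def less_Suc_eq)
  qed
  ultimately show ?case by blast
qed

lemma deriv_line:
  fixes f :: "'a::real_inner \<Rightarrow> real"
  assumes grad: "\<And>z. (f has_derivative (\<lambda>d. inner (Df z) d)) (at z)"
  shows "((\<lambda>\<theta>. f (x + \<theta> *\<^sub>R d)) has_real_derivative inner (Df (x + \<theta> *\<^sub>R d)) d) (at \<theta>)"
proof -
  have "((\<lambda>\<theta>. x + \<theta> *\<^sub>R d) has_derivative (\<lambda>h. h *\<^sub>R d)) (at \<theta>)"
    by (auto intro!: derivative_eq_intros)
  then have "((\<lambda>\<theta>. f (x + \<theta> *\<^sub>R d)) has_derivative (\<lambda>h. inner (Df (x + \<theta> *\<^sub>R d)) (h *\<^sub>R d))) (at \<theta>)"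
    by (rule has_derivative_compose[OF _ grad])
  moreover have "(\<lambda>h. inner (Df (x + \<theta> *\<^sub>R d)) (h *\<^sub>R d)) = (*) (inner (Df (x + \<theta> *\<^sub>R d)) d)"
    by (simp add: fun_eq_iff mult.commute)
  ultimately show ?thesis unfolding has_field_derivative_def by simp
qed

lemma grad_ineq:
  fixes f :: "'a::real_inner \<Rightarrow> real"
  assumes conv: "convex_on UNIV f" and grad: "\<And>z. (f has_derivative (\<lambda>d. inner (Df z) d)) (at z)"
  shows "f x + inner (Df x) (z - x) \<le> f z"
proof -
  define d where "d = z - x"
  define \<phi> where "\<phi> t = f (x + t *\<^sub>R d)" for t
  have D: "(\<phi> has_real_derivative inner (Df x) d) (at 0)"
    using deriv_line[OF grad, where x=x and \<theta>=0 and d=d] unfolding \<phi>_def by simp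
  have lim: "((\<lambda>h. (\<phi> (0 + h) - \<phi> 0) / h) \<longlongrightarrow> inner (Df x) d) (at_right 0)"
    using DERIV_D[OF D] by (rule tendsto_within_subset) auto
  have ev: "eventually (\<lambda>h. (\<phi> (0 + h) - \<phi> 0) / h \<le> f z - f x) (at_right 0)"
    using eventually_at_right_real[of 0 1, OF zero_less_one]
  proof eventually_elim
    case (elim t)
    then have t: "0 < t" "t < 1" by auto
    have e: "x + t *\<^sub>R d = (1 - t) *\<^sub>R x + t *\<^sub>R z" unfolding d_def by (simp add: algebra_simps)
    have "\<phi> t \<le> (1 - t) * f x + t * f z" unfolding \<phi>_def e
      using t by (intro convex_onD[OF conv]) auto
    then have "\<phi> t - \<phi> 0 \<le> t * (f z - f x)" unfolding \<phi>_def by (simp add: algebra_simps)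
    then show ?case using t by (simp add: pos_divide_le_eq mult.commute)
  qed
  have "inner (Df x) d \<le> f z - f x"
    by (rule tendsto_le[OF trivial_limit_at_right_real tendsto_const lim ev])
  then show ?thesis unfolding d_def by simp
qed

lemma descent:
  fixes f :: "'a::real_inner \<Rightarrow> real"
  assumes grad: "\<And>z. (f has_derivative (\<lambda>d. inner (Df z) d)) (at z)"
    and lip: "\<And>u v. norm (Df u - Df v) \<le> L * norm (u - v)" and L: "0 \<le> L"
  shows "f z \<le> f x + inner (Df x) (z - x) + L / 2 * norm (z - x)^2"
proof -
  define d where "d = z - x"
  define N where "N = norm d ^ 2"
  define c where "c = inner (Df x) d"
  define \<psi> where "\<psi> t = f (x + t *\<^sub>R d) - t * c - L / 2 * t^2 * N" for t
  have "\<psi> 1 \<le> \<psi> 0"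
  proof (rule DERIV_nonpos_imp_nonincreasing[of 0 1 \<psi>])
    fix t :: real assume t: "0 \<le> t" "t \<le> 1"
    have der: "(\<psi> has_real_derivative (inner (Df (x + t *\<^sub>R d)) d - c - L / 2 * (2 * t) * N)) (at t)"
      unfolding \<psi>_def
      by (intro DERIV_diff deriv_line[OF grad] DERIV_cmult DERIV_cmult_right)
         (auto intro!: derivative_eq_intros)
    have "inner (Df (x + t *\<^sub>R d)) d - c = inner (Df (x + t *\<^sub>R d) - Df x) d"
      unfolding c_def by (simp add: inner_diff_left)
    also have "\<dots> \<le> norm (Df (x + t *\<^sub>R d) - Df x) * norm d" by (rule norm_cauchy_schwarz)
    also have "\<dots> \<le> L * norm (t *\<^sub>R d) * norm d"
      using lip[of "x + t *\<^sub>R d" x] by (intro mult_right_mono) auto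
    also have "\<dots> = L * t * N" unfolding N_def using t by (simp add: power2_eq_square)
    finally have "inner (Df (x + t *\<^sub>R d)) d - c - L / 2 * (2 * t) * N \<le> 0" by simp
    then show "\<exists>y. (\<psi> has_real_derivative y) (at t) \<and> y \<le> 0" using der by blast
  qed simp
  then show ?thesis unfolding \<psi>_def d_def N_def c_def by simp
qed

lemma cocoercive:
  fixes f :: "'a::real_inner \<Rightarrow> real"
  assumes conv: "convex_on UNIV f" and grad: "\<And>z. (f has_derivative (\<lambda>d. inner (Df z) d)) (at z)"
    and lip: "\<And>u v. norm (Df u - Df v) \<le> L * norm (u - v)" and L: "0 < L"
  shows "norm (Df x - Df y)^2 / L \<le> inner (Df x - Df y) (x - y)"
proof -
  have half: "norm (Df b - Df a)^2 / (2 * L) \<le> f b - f a - inner (Df a) (b - a)" for a b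
  proof -
    define G where "G = Df b - Df a"
    define z where "z = b - (1 / L) *\<^sub>R G"
    have 1: "f a + inner (Df a) (z - a) \<le> f z" by (rule grad_ineq[OF conv grad])
    have 2: "f z \<le> f b + inner (Df b) (z - b) + L / 2 * norm (z - b)^2"
      by (rule descent[OF grad lip]) (use L in auto)
    have z1: "inner (Df a) (z - a) = inner (Df a) (b - a) - inner (Df a) G / L"
      unfolding z_def by (simp add: inner_diff_right algebra_simps)
    have z2: "inner (Df b) (z - b) = - inner (Df b) G / L" unfolding z_def by simp
    have z3: "L / 2 * norm (z - b)^2 = norm G ^2 / (2 * L)" unfolding z_def using L
      by (simp add: power2_eq_square field_simps)
    have z4: "inner (Df b) G / L - inner (Df a) G / L = norm G ^2 / L"
      unfolding G_def by (simp add: diff_divide_distrib[symmetric] inner_diff_left[symmetric] power2_norm_eq_inner)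
    have z5: "norm G ^2 / L - norm G ^2 / (2 * L) = norm G^2 / (2 * L)" using L by (simp add: field_simps)
    show ?thesis using 1 2 z1 z2 z3 z4 z5 unfolding G_def by argo
  qed
  have h1: "norm (Df x - Df y)^2 / (2 * L) \<le> f x - f y - inner (Df y) (x - y)" using half[of x y] .
  have h2: "norm (Df x - Df y)^2 / (2 * L) \<le> f y - f x - inner (Df x) (y - x)"
    using half[of y x] by (simp add: norm_minus_commute)
  have "(f x - f y - inner (Df y) (x - y)) + (f y - f x - inner (Df x) (y - x)) = inner (Df x - Df y) (x - y)"
    by (simp add: inner_diff_left inner_diff_right algebra_simps)
  moreover have "norm (Df x - Df y)^2 / (2 * L) + norm (Df x - Df y)^2 / (2 * L) = norm (Df x - Df y)^2 / L"
    using L by (simp add: field_simps)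
  moreover note h1 h2
  ultimately show ?thesis by argo
qed

lemma subdiff_mono:
  assumes "\<alpha> \<in> subdiff_on S \<phi> a" "\<beta> \<in> subdiff_on S \<phi> b" "a \<in> S" "b \<in> S"
  shows "0 \<le> inner (\<alpha> - \<beta>) (a - b)"
proof -
  obtain A where A: "\<phi> a = ereal A" using assms(1) unfolding subdiff_on_def by (cases "\<phi> a") auto
  obtain Bv where Bv: "\<phi> b = ereal Bv" using assms(2) unfolding subdiff_on_def by (cases "\<phi> b") auto
  have "\<phi> a + ereal (inner \<alpha> (b - a)) \<le> \<phi> b" using assms(1,4) unfolding subdiff_on_def by auto
  then have 1: "A + inner \<alpha> (b - a) \<le> Bv" using A Bv by simp
  have "\<phi> b + ereal (inner \<beta> (a - b)) \<le> \<phi> a" using assms(2,3) unfolding subdiff_on_def by auto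
  then have 2: "Bv + inner \<beta> (a - b) \<le> A" using A Bv by simp
  have 3: "inner \<alpha> (b - a) = - inner \<alpha> (a - b)" by (simp add: inner_diff_right)
  have 4: "inner (\<alpha> - \<beta>) (a - b) = inner \<alpha> (a - b) - inner \<beta> (a - b)" by (simp add: inner_diff_left)
  show ?thesis using 1 2 3 4 by argo
qed

lemma amgm: fixes a b s \<theta> :: real assumes "0 < s" "0 < \<theta>"
  shows "2 * a * b \<le> \<theta> * a^2 / s + s * b^2 / \<theta>"
proof -
  have "\<theta> * a^2 / s + s * b^2 / \<theta> - 2 * a * b = (\<theta> * a - s * b)^2 / (\<theta> * s)"
    using assms by (simp add: field_simps power2_eq_square)
  moreover have "0 \<le> (\<theta> * a - s * b)^2 / (\<theta> * s)" using assms by simp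
  ultimately show ?thesis by argo
qed

lemma quad_pos:
  fixes B :: "nat \<Rightarrow> 'a::real_normed_vector \<Rightarrow> 'b::real_inner"
  assumes Bl: "\<And>i. i < m \<Longrightarrow> bounded_linear (B i)" and s: "\<And>i. i < m \<Longrightarrow> 0 < s i"
    and c: "(\<Sum>i<m. s i * (onorm (B i))^2) < c"
  shows "\<exists>\<epsilon>>0. \<forall>dx dv. \<epsilon> * (norm dx^2 + (\<Sum>i<m. norm (dv i)^2))
      \<le> c * norm dx^2 + (\<Sum>i<m. norm (dv i)^2 / s i - 2 * inner (dv i) (B i dx))"
proof -
  define Ss where "Ss = (\<Sum>i<m. s i * (onorm (B i))^2)"
  have Ss0: "0 \<le> Ss" unfolding Ss_def using s by (intro sum_nonneg mult_nonneg_nonneg) (auto intro: less_imp_le)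
  have c0: "0 < c" using c Ss0 unfolding Ss_def by linarith
  define \<theta> where "\<theta> = (Ss + c) / (2 * c)"
  have th: "0 < \<theta>" "\<theta> < 1" unfolding \<theta>_def using c0 Ss0 c Ss_def by (auto simp: field_simps)
  define Sm where "Sm = (\<Sum>i<m. s i) + 1"
  have sSm: "s i \<le> Sm" if "i < m" for i
  proof -
    have "s i \<le> (\<Sum>i<m. s i)" using that s by (intro member_le_sum) (auto intro: less_imp_le)
    then show ?thesis unfolding Sm_def by simp
  qed
  have Sm0: "0 < Sm" unfolding Sm_def using s by (smt (verit) lessThan_iff sum_nonneg)
  define \<epsilon>1 where "\<epsilon>1 = c - Ss / \<theta>"
  have e1: "0 < \<epsilon>1"
  proof -
    have "Ss / \<theta> = 2 * c * Ss / (Ss + c)" unfolding \<theta>_def using c0 Ss0 by (simp add: field_simps)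
    also have "\<dots> < c"
    proof -
      have "2 * c * Ss < c * (Ss + c)" using c0 c unfolding Ss_def by (simp add: algebra_simps)
      then show ?thesis using c0 Ss0 by (simp add: pos_divide_less_eq)
    qed
    finally show ?thesis unfolding \<epsilon>1_def by simp
  qed
  define \<epsilon>2 where "\<epsilon>2 = (1 - \<theta>) / Sm"
  have e2: "0 < \<epsilon>2" unfolding \<epsilon>2_def using th Sm0 by simp
  define \<epsilon> where "\<epsilon> = min \<epsilon>1 \<epsilon>2"
  have "\<forall>dx dv. \<epsilon> * (norm dx^2 + (\<Sum>i<m. norm (dv i)^2))
      \<le> c * norm dx^2 + (\<Sum>i<m. norm (dv i)^2 / s i - 2 * inner (dv i) (B i dx))"
  proof (intro allI)
    fix dx :: 'a and dv :: "nat \<Rightarrow> 'b"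
    define d where "d = norm dx"
    have per: "\<epsilon>2 * norm (dv i)^2 - s i * (onorm (B i))^2 * d^2 / \<theta>
        \<le> norm (dv i)^2 / s i - 2 * inner (dv i) (B i dx)" if i: "i < m" for i
    proof -
      define n where "n = onorm (B i)"
      define a where "a = norm (dv i)"
      have si: "0 < s i" using s i .
      have "inner (dv i) (B i dx) \<le> norm (dv i) * norm (B i dx)" by (rule norm_cauchy_schwarz)
      also have "\<dots> \<le> a * (n * d)" unfolding a_def n_def d_def
        by (intro mult_left_mono onorm[OF Bl[OF i]]) auto
      finally have 1: "2 * inner (dv i) (B i dx) \<le> 2 * a * (n * d)" by simp
      have 2: "2 * a * (n * d) \<le> \<theta> * a^2 / s i + s i * (n * d)^2 / \<theta>" by (rule amgm[OF si th(1)])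
      have 3: "\<epsilon>2 * a^2 \<le> (1 - \<theta>) * a^2 / s i"
      proof -
        have "(1 - \<theta>) / Sm \<le> (1 - \<theta>) / s i" using th si sSm[OF i] by (intro divide_left_mono) auto
        then have "(1 - \<theta>) / Sm * a^2 \<le> (1 - \<theta>) / s i * a^2" by (rule mult_right_mono) simp
        then show ?thesis unfolding \<epsilon>2_def by simp
      qed
      have 4: "(1 - \<theta>) * a^2 / s i = a^2 / s i - \<theta> * a^2 / s i" by (simp add: algebra_simps diff_divide_distrib)
      have 5: "s i * (n * d)^2 / \<theta> = s i * n^2 * d^2 / \<theta>" by (simp add: power_mult_distrib)
      show ?thesis using 1 2 3 4 5 unfolding a_def n_def by argo
    qed
    have "(\<Sum>i<m. \<epsilon>2 * norm (dv i)^2 - s i * (onorm (B i))^2 * d^2 / \<theta>)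
        \<le> (\<Sum>i<m. norm (dv i)^2 / s i - 2 * inner (dv i) (B i dx))"
      using per by (intro sum_mono) auto
    moreover have "(\<Sum>i<m. \<epsilon>2 * norm (dv i)^2 - s i * (onorm (B i))^2 * d^2 / \<theta>)
        = \<epsilon>2 * (\<Sum>i<m. norm (dv i)^2) - Ss * d^2 / \<theta>"
      unfolding Ss_def by (simp add: sum_subtractf sum_distrib_left sum_divide_distrib sum_distrib_right)
    ultimately have A: "\<epsilon>2 * (\<Sum>i<m. norm (dv i)^2) - Ss * d^2 / \<theta>
        \<le> (\<Sum>i<m. norm (dv i)^2 / s i - 2 * inner (dv i) (B i dx))" by simp
    have S0: "0 \<le> (\<Sum>i<m. norm (dv i)^2)" by (intro sum_nonneg) auto
    have B1: "\<epsilon> * d^2 \<le> \<epsilon>1 * d^2" unfolding \<epsilon>_def by (intro mult_right_mono) auto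
    have B2: "\<epsilon> * (\<Sum>i<m. norm (dv i)^2) \<le> \<epsilon>2 * (\<Sum>i<m. norm (dv i)^2)"
      unfolding \<epsilon>_def using S0 by (intro mult_right_mono) auto
    have B3: "\<epsilon>1 * d^2 = c * d^2 - Ss * d^2 / \<theta>" unfolding \<epsilon>1_def by (simp add: algebra_simps)
    have B4: "\<epsilon> * (d^2 + (\<Sum>i<m. norm (dv i)^2)) = \<epsilon> * d^2 + \<epsilon> * (\<Sum>i<m. norm (dv i)^2)"
      by (simp add: algebra_simps)
    show "\<epsilon> * (norm dx^2 + (\<Sum>i<m. norm (dv i)^2))
      \<le> c * norm dx^2 + (\<Sum>i<m. norm (dv i)^2 / s i - 2 * inner (dv i) (B i dx))"
      using A B1 B2 B3 B4 unfolding d_def by argo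
  qed
  moreover have "0 < \<epsilon>" unfolding \<epsilon>_def using e1 e2 by simp
  ultimately show ?thesis by blast
qed

locale cvsetup =
  fixes f :: "'a::{real_inner,complete_space} \<Rightarrow> real"
    and Df :: "'a \<Rightarrow> 'a"
    and g :: "'a \<Rightarrow> ereal"
    and m :: nat
    and V :: "nat \<Rightarrow> 'b::{real_inner,complete_space} set"
    and h :: "nat \<Rightarrow> 'b \<Rightarrow> ereal"
    and B :: "nat \<Rightarrow> 'a \<Rightarrow> 'b"
    and L \<gamma> \<sigma> \<tau> :: real
    and w :: "nat \<Rightarrow> real"
    and x :: "nat \<Rightarrow> 'a"
    and y :: "nat \<Rightarrow> nat \<Rightarrow> 'b"
  assumes f_conv: "convex_on UNIV f"
    and f_grad: "\<And>z. (f has_derivative (\<lambda>d. inner (Df z) d)) (at z)"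
    and L_pos: "0 < L"
    and Df_lip: "\<And>u v. norm (Df u - Df v) \<le> L * norm (u - v)"
    and g_G0: "Gamma0_on UNIV g"
    and V_sub: "\<And>i. i < m \<Longrightarrow> subspace (V i) \<and> closed (V i)"
    and h_G0: "\<And>i. i < m \<Longrightarrow> Gamma0_on (V i) (h i)"
    and B_lin: "\<And>i. i < m \<Longrightarrow> bounded_linear (B i)"
    and B_range: "\<And>i z. i < m \<Longrightarrow> B i z \<in> V i"
    and sol_exists: "\<exists>xh v u. v \<in> subdiff_on UNIV g xh
        \<and> (\<forall>i<m. u i \<in> subdiff_on (V i) (h i) (B i xh))
        \<and> Df xh + v + (\<Sum>i<m. adjoint (B i) (u i)) = 0"
    and w_range: "\<And>i. i < m \<Longrightarrow> 0 < w i \<and> w i < 1"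
    and w_sum: "(\<Sum>i<m. w i) = 1"
    and gamma_range: "0 < \<gamma>" "\<gamma> < 2 / L"
    and sigma_pos: "0 < \<sigma>" and tau_pos: "0 < \<tau>"
    and step_cond: "\<sigma> * \<tau> * (\<Sum>i<m. w i * (onorm (B i))^2) < 1"
    and y0: "\<And>i. i < m \<Longrightarrow> y 0 i \<in> V i"
    and x_iter: "\<And>k. x (Suc k) = prox_on UNIV (\<tau> * \<gamma> / (1 + \<tau>)) g
        ((1 / (1 + \<tau>)) *\<^sub>R (x k - \<tau> *\<^sub>R (\<Sum>i<m. w i *\<^sub>R adjoint (B i) (y k i))
            + \<tau> *\<^sub>R (x k - \<gamma> *\<^sub>R Df (x k))))"
    and y_iter: "\<And>k i. i < m \<Longrightarrow> y (Suc k) i = (\<gamma> / w i) *\<^sub>R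
        prox_on (V i) (w i * \<sigma> / \<gamma>) (conj_on (V i) (h i))
          ((w i / \<gamma>) *\<^sub>R (y k i + \<sigma> *\<^sub>R B i (2 *\<^sub>R x (Suc k) - x k)))"
begin

definition "t = \<tau> * \<gamma> / (1 + \<tau>)"
definition "s i = w i * \<sigma> / \<gamma>"
definition "v k i = (w i / \<gamma>) *\<^sub>R y k i"
definition "Bt i = adjoint (B i)"

lemma t_pos: "0 < t" unfolding t_def using tau_pos gamma_range by simp
lemma s_pos: "i < m \<Longrightarrow> 0 < s i" unfolding s_def using w_range sigma_pos gamma_range by simp
lemma Vs: "i < m \<Longrightarrow> subspace (V i)" using V_sub by blast
lemma Vc: "i < m \<Longrightarrow> closed (V i)" using V_sub by blast

lemma adj: "i < m \<Longrightarrow> inner (B i a) b = inner a (Bt i b)"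
  unfolding Bt_def by (rule adjoint_works_gen[OF B_lin])

lemma B_diff: "i < m \<Longrightarrow> B i (a - b) = B i a - B i b"
  using B_lin bounded_linear.linear linear_diff by blast
lemma B_add: "i < m \<Longrightarrow> B i (a + b) = B i a + B i b"
  using B_lin bounded_linear.linear linear_add by blast
lemma B_scale: "i < m \<Longrightarrow> B i (c *\<^sub>R a) = c *\<^sub>R B i a"
  using B_lin bounded_linear.linear linear_scale by blast

lemma inner_eqI: "(\<And>z. inner z a = inner z b) \<Longrightarrow> a = b" for a b :: "'c::real_inner"
proof -
  assume "\<And>z. inner z a = inner z b"
  then have "inner (a - b) (a - b) = 0" by (simp add: inner_diff_right)
  then show "a = b" by simp
qed

lemma Bt_scale: "i < m \<Longrightarrow> Bt i (c *\<^sub>R b) = c *\<^sub>R Bt i b"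
proof -
  assume i: "i < m"
  show ?thesis
  proof (rule inner_eqI)
    fix z
    show "inner z (Bt i (c *\<^sub>R b)) = inner z (c *\<^sub>R Bt i b)"
      using adj[OF i, of z "c *\<^sub>R b"] adj[OF i, of z b] by simp
  qed
qed

lemma inner_sum_Bt: "inner (\<Sum>i<m. Bt i (b i)) z = (\<Sum>i<m. inner (b i) (B i z))"
  unfolding inner_sum_left by (intro sum.cong refl) (metis adj inner_commute lessThan_iff)

lemma x_rew: "x (Suc k) = prox_on UNIV t g (x k - t *\<^sub>R (Df (x k) + (\<Sum>i<m. Bt i (v k i))))"
proof -
  have 1: "(\<Sum>i<m. w i *\<^sub>R adjoint (B i) (y k i)) = \<gamma> *\<^sub>R (\<Sum>i<m. Bt i (v k i))"
    unfolding scaleR_sum_right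
  proof (intro sum.cong refl)
    fix i assume "i \<in> {..<m}"
    then have i: "i < m" by simp
    show "w i *\<^sub>R adjoint (B i) (y k i) = \<gamma> *\<^sub>R Bt i (v k i)"
      unfolding v_def Bt_scale[OF i] using gamma_range by (simp add: Bt_def)
  qed
  define S where "S = (\<Sum>i<m. Bt i (v k i))"
  have "(1 / (1 + \<tau>)) *\<^sub>R (x k - \<tau> *\<^sub>R (\<gamma> *\<^sub>R S) + \<tau> *\<^sub>R (x k - \<gamma> *\<^sub>R Df (x k)))
      = x k - t *\<^sub>R (Df (x k) + S)"
  proof -
    have e: "x k - \<tau> *\<^sub>R (\<gamma> *\<^sub>R S) + \<tau> *\<^sub>R (x k - \<gamma> *\<^sub>R Df (x k))
         = (1 + \<tau>) *\<^sub>R x k - (\<tau> * \<gamma>) *\<^sub>R (Df (x k) + S)"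
      by (simp add: algebra_simps)
    have "(1 / (1 + \<tau>)) *\<^sub>R ((1 + \<tau>) *\<^sub>R x k - (\<tau> * \<gamma>) *\<^sub>R (Df (x k) + S))
        = x k - ((\<tau> * \<gamma>) / (1 + \<tau>)) *\<^sub>R (Df (x k) + S)"
      using tau_pos by (simp add: scaleR_diff_right)
    then show ?thesis unfolding e t_def by simp
  qed
  then show ?thesis unfolding x_iter 1 t_def S_def by simp
qed

lemma v_rew: "i < m \<Longrightarrow> v (Suc k) i = prox_on (V i) (s i) (conj_on (V i) (h i))
     (v k i + s i *\<^sub>R B i (2 *\<^sub>R x (Suc k) - x k))"
proof -
  assume i: "i < m"
  have w0: "w i \<noteq> 0" "\<gamma> \<noteq> 0" using w_range[OF i] gamma_range by auto
  have "(w i / \<gamma>) *\<^sub>R (y k i + \<sigma> *\<^sub>R B i (2 *\<^sub>R x (Suc k) - x k))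
      = v k i + s i *\<^sub>R B i (2 *\<^sub>R x (Suc k) - x k)"
    unfolding v_def s_def by (simp add: scaleR_add_right)
  then show ?thesis unfolding v_def[of "Suc k"] y_iter[OF i] s_def using w0 by simp
qed

end

context cvsetup begin

definition "u k = (1/t) *\<^sub>R (x k - t *\<^sub>R (Df (x k) + (\<Sum>i<m. Bt i (v k i))) - x (Suc k))"
definition "P k i = (1 / s i) *\<^sub>R (v k i + s i *\<^sub>R B i (2 *\<^sub>R x (Suc k) - x k) - v (Suc k) i)"
definition "KKT a b \<longleftrightarrow> (- Df a - (\<Sum>i<m. Bt i (b i))) \<in> subdiff_on UNIV g a
     \<and> (\<forall>i<m. b i \<in> subdiff_on (V i) (h i) (B i a))"

lemma vV: "i < m \<Longrightarrow> v k i \<in> V i"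
proof (induction k)
  case 0
  then show ?case unfolding v_def using y0 Vs by (auto intro: subspace_scale)
next
  case (Suc k)
  have r: "v k i + s i *\<^sub>R B i (2 *\<^sub>R x (Suc k) - x k) \<in> V i"
    using Suc Vs[OF Suc.prems] B_range[OF Suc.prems] by (intro subspace_add subspace_scale) auto
  obtain p where "p \<in> V i" "prox_on (V i) (s i) (conj_on (V i) (h i)) (v k i + s i *\<^sub>R B i (2 *\<^sub>R x (Suc k) - x k))
      = (v k i + s i *\<^sub>R B i (2 *\<^sub>R x (Suc k) - x k)) - s i *\<^sub>R p"
    using moreau[OF Vs[OF Suc.prems] Vc[OF Suc.prems] h_G0[OF Suc.prems] s_pos[OF Suc.prems] r] by blast
  then show ?case unfolding v_rew[OF Suc.prems] using r Vs[OF Suc.prems]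
    by (auto intro: subspace_diff subspace_scale)
qed

lemma u_sub: "u k \<in> subdiff_on UNIV g (x (Suc k))"
  using prox_subdiff[OF g_G0 subspace_UNIV closed_UNIV t_pos UNIV_I,
      of "x k - t *\<^sub>R (Df (x k) + (\<Sum>i<m. Bt i (v k i)))"]
  unfolding u_def x_rew[of k] by simp

lemma P_sub: "i < m \<Longrightarrow> P k i \<in> V i \<and> v (Suc k) i \<in> subdiff_on (V i) (h i) (P k i)"
proof -
  assume i: "i < m"
  define r where "r = v k i + s i *\<^sub>R B i (2 *\<^sub>R x (Suc k) - x k)"
  have rV: "r \<in> V i" unfolding r_def
    using vV[OF i] Vs[OF i] B_range[OF i] by (intro subspace_add subspace_scale) auto
  obtain p where p: "p \<in> V i" "prox_on (V i) (s i) (conj_on (V i) (h i)) r = r - s i *\<^sub>R p"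
      "r - s i *\<^sub>R p \<in> subdiff_on (V i) (h i) p"
    using moreau[OF Vs[OF i] Vc[OF i] h_G0[OF i] s_pos[OF i] rV] by blast
  have vs: "v (Suc k) i = r - s i *\<^sub>R p" unfolding v_rew[OF i] r_def[symmetric] p(2) ..
  have "P k i = p" unfolding P_def r_def[symmetric] vs using s_pos[OF i] by simp
  then show ?thesis using p vs by simp
qed

lemma inner_u: "inner (u k) z = inner (x k - x (Suc k)) z / t - inner (Df (x k)) z
     - (\<Sum>i<m. inner (v k i) (B i z))"
proof -
  have "u k = (1/t) *\<^sub>R (x k - x (Suc k)) - (Df (x k) + (\<Sum>i<m. Bt i (v k i)))"
    unfolding u_def using t_pos by (simp add: algebra_simps)
  then show ?thesis by (simp add: inner_diff_left inner_add_left inner_sum_Bt)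
qed

lemma P_eq: "i < m \<Longrightarrow> P k i = B i (x (Suc k)) + B i (x (Suc k) - x k) - (1 / s i) *\<^sub>R (v (Suc k) i - v k i)"
proof -
  assume i: "i < m"
  have "2 *\<^sub>R x (Suc k) - x k = x (Suc k) + (x (Suc k) - x k)" by (simp add: algebra_simps scaleR_2)
  then have e: "B i (2 *\<^sub>R x (Suc k) - x k) = B i (x (Suc k)) + B i (x (Suc k) - x k)"
    using B_add[OF i, of "x (Suc k)" "x (Suc k) - x k"] by (simp only:)
  show ?thesis unfolding P_def e using s_pos[OF i] by (simp add: algebra_simps)
qed

lemma KKT_exists: "\<exists>a b. KKT a b"
proof -
  obtain xh vv uu where H: "vv \<in> subdiff_on UNIV g xh" "\<forall>i<m. uu i \<in> subdiff_on (V i) (h i) (B i xh)"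
    "Df xh + vv + (\<Sum>i<m. adjoint (B i) (uu i)) = 0" using sol_exists by blast
  have "vv = - Df xh - (\<Sum>i<m. Bt i (uu i))" using H(3) unfolding Bt_def
    by (simp add: algebra_simps eq_neg_iff_add_eq_0 add.assoc)
  then have "KKT xh uu" unfolding KKT_def using H by simp
  then show ?thesis by blast
qed

end

context cvsetup begin

definition "Wf a b k = norm (x k - a)^2 / t + (\<Sum>i<m. norm (v k i - b i)^2 / s i
     - 2 * inner (v k i - b i) (B i (x k - a)))"
definition "Qf k = (1/t - L/2) * norm (x (Suc k) - x k)^2 + (\<Sum>i<m. norm (v (Suc k) i - v k i)^2 / s i
     - 2 * inner (v (Suc k) i - v k i) (B i (x (Suc k) - x k)))"

lemma lyap:
  assumes K: "KKT a b"
  shows "Wf a b (Suc k) + Qf k \<le> Wf a b k"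
proof -
  define X where "X = x k - a"
  define X' where "X' = x (Suc k) - a"
  define dx where "dx = x (Suc k) - x k"
  define Y where "Y i = v k i - b i" for i
  define Y' where "Y' i = v (Suc k) i - b i" for i
  define dv where "dv i = v (Suc k) i - v k i" for i
  define G where "G = Df (x k) - Df a"
  have XX: "X' = X + dx" unfolding X_def X'_def dx_def by simp
  have YY: "Y' i = Y i + dv i" for i unfolding Y_def Y'_def dv_def by simp
  have Kg: "(- Df a - (\<Sum>i<m. Bt i (b i))) \<in> subdiff_on UNIV g a" using K unfolding KKT_def by blast
  have mg0: "0 \<le> inner (u k - (- Df a - (\<Sum>i<m. Bt i (b i)))) (x (Suc k) - a)"
    by (rule subdiff_mono[OF u_sub Kg]) auto
  have mg: "0 \<le> inner (x k - x (Suc k)) X' / t - inner G X' - (\<Sum>i<m. inner (Y i) (B i X'))"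
  proof -
    have "inner (u k - (- Df a - (\<Sum>i<m. Bt i (b i)))) X'
        = inner (x k - x (Suc k)) X' / t - inner (Df (x k)) X' - (\<Sum>i<m. inner (v k i) (B i X'))
          + inner (Df a) X' + (\<Sum>i<m. inner (b i) (B i X'))"
      by (simp add: inner_diff_left inner_u inner_sum_Bt)
    moreover have "(\<Sum>i<m. inner (v k i) (B i X')) - (\<Sum>i<m. inner (b i) (B i X')) = (\<Sum>i<m. inner (Y i) (B i X'))"
      unfolding Y_def by (simp add: sum_subtractf[symmetric] inner_diff_left)
    moreover have "inner G X' = inner (Df (x k)) X' - inner (Df a) X'" unfolding G_def by (simp add: inner_diff_left)
    ultimately show ?thesis using mg0 unfolding X'_def by argo
  qed
  define H where "H i = inner (Y' i) (B i X') + inner (Y' i) (B i dx) - inner (Y' i) (dv i) / s i" for i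
  have mh: "0 \<le> H i" if i: "i < m" for i
  proof -
    have Kh: "b i \<in> subdiff_on (V i) (h i) (B i a)" using K i unfolding KKT_def by blast
    have "0 \<le> inner (v (Suc k) i - b i) (P k i - B i a)"
      using subdiff_mono[OF conjunct2[OF P_sub[OF i]] Kh conjunct1[OF P_sub[OF i]] B_range[OF i]] .
    moreover have "P k i - B i a = B i X' + B i dx - (1 / s i) *\<^sub>R dv i"
      unfolding P_eq[OF i] X'_def dx_def dv_def B_diff[OF i] by (simp add: algebra_simps)
    ultimately show ?thesis unfolding H_def Y'_def
      by (simp add: inner_diff_right inner_add_right)
  qed
  have mhs: "0 \<le> (\<Sum>i<m. H i)" using mh by (intro sum_nonneg) auto
  have coco: "- inner G X' \<le> L / 4 * norm dx ^2"
  proof -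
    have c1: "norm G ^2 / L \<le> inner G X" unfolding G_def X_def
      by (rule cocoercive[OF f_conv f_grad Df_lip L_pos])
    have c2: "- inner G dx \<le> norm G * norm dx" using norm_cauchy_schwarz[of G "- dx"] by simp
    have c3: "norm G * norm dx - norm G ^2 / L \<le> L / 4 * norm dx ^2"
    proof -
      have "0 \<le> (norm G - L / 2 * norm dx)^2 / L" using L_pos by simp
      moreover have "(norm G - L / 2 * norm dx)^2 / L = norm G^2 / L - norm G * norm dx + L / 4 * norm dx ^2"
        using L_pos by (simp add: power2_eq_square field_simps)
      ultimately show ?thesis by argo
    qed
    have "inner G X' = inner G X + inner G dx" unfolding XX by (simp add: inner_add_right)
    then show ?thesis using c1 c2 c3 by argo
  qed
  have polx: "2 * inner (x k - x (Suc k)) X' = norm X ^2 - norm X' ^2 - norm dx ^2"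
  proof -
    have "x k - x (Suc k) = - dx" unfolding dx_def by simp
    moreover have "X = X' - dx" unfolding XX by simp
    ultimately show ?thesis by (simp add: norm_sq_diff inner_commute)
  qed
  define T where "T i = H i - inner (Y i) (B i X')" for i
  have perT: "2 * T i = (norm (Y i)^2 / s i - 2 * inner (Y i) (B i X))
      - (norm (Y' i)^2 / s i - 2 * inner (Y' i) (B i X'))
      - (norm (dv i)^2 / s i - 2 * inner (dv i) (B i dx))" if i: "i < m" for i
  proof -
    have BX: "B i X' = B i X + B i dx" unfolding XX by (rule B_add[OF i])
    have n1: "norm (Y i)^2 = norm (Y' i)^2 - 2 * inner (Y' i) (dv i) + norm (dv i)^2"
      using norm_sq_diff[of "Y' i" "dv i"] unfolding YY by simp
    have d: "inner (Y' i) (dv i) / s i * 2 = (2 * inner (Y' i) (dv i)) / s i" by simp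
    have n2: "norm (Y i)^2 / s i - norm (Y' i)^2 / s i - norm (dv i)^2 / s i = - (2 * inner (Y' i) (dv i)) / s i"
      unfolding n1 by (simp add: diff_divide_distrib add_divide_distrib)
    have e1: "inner (Y' i) (B i X') = inner (Y i) (B i X) + inner (Y i) (B i dx) + inner (dv i) (B i X) + inner (dv i) (B i dx)"
      unfolding YY BX by (simp add: inner_add_left inner_add_right)
    have e2: "inner (Y' i) (B i dx) = inner (Y i) (B i dx) + inner (dv i) (B i dx)"
      unfolding YY by (simp add: inner_add_left)
    have e3: "inner (Y i) (B i X') = inner (Y i) (B i X) + inner (Y i) (B i dx)"
      unfolding BX by (simp add: inner_add_right)
    show ?thesis unfolding T_def H_def using n2 e1 e2 e3 d by argo
  qed
  have sumT: "2 * (\<Sum>i<m. T i) = (\<Sum>i<m. (norm (Y i)^2 / s i - 2 * inner (Y i) (B i X))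
      - (norm (Y' i)^2 / s i - 2 * inner (Y' i) (B i X'))
      - (norm (dv i)^2 / s i - 2 * inner (dv i) (B i dx)))"
    unfolding sum_distrib_left using perT by (intro sum.cong) auto
  have sumT2: "(\<Sum>i<m. T i) = (\<Sum>i<m. H i) - (\<Sum>i<m. inner (Y i) (B i X'))"
    unfolding T_def by (simp add: sum_subtractf)
  have split: "(\<Sum>i<m. (norm (Y i)^2 / s i - 2 * inner (Y i) (B i X))
      - (norm (Y' i)^2 / s i - 2 * inner (Y' i) (B i X'))
      - (norm (dv i)^2 / s i - 2 * inner (dv i) (B i dx)))
     = (\<Sum>i<m. norm (Y i)^2 / s i - 2 * inner (Y i) (B i X))
      - (\<Sum>i<m. norm (Y' i)^2 / s i - 2 * inner (Y' i) (B i X'))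
      - (\<Sum>i<m. norm (dv i)^2 / s i - 2 * inner (dv i) (B i dx))"
    by (simp add: sum_subtractf)
  have W0: "Wf a b k = norm X^2 / t + (\<Sum>i<m. norm (Y i)^2 / s i - 2 * inner (Y i) (B i X))"
    unfolding Wf_def X_def Y_def ..
  have W1: "Wf a b (Suc k) = norm X'^2 / t + (\<Sum>i<m. norm (Y' i)^2 / s i - 2 * inner (Y' i) (B i X'))"
    unfolding Wf_def X'_def Y'_def ..
  have Q: "Qf k = (1/t - L/2) * norm dx^2 + (\<Sum>i<m. norm (dv i)^2 / s i - 2 * inner (dv i) (B i dx))"
    unfolding Qf_def dx_def dv_def ..
  have tt: "2 * (inner (x k - x (Suc k)) X' / t) = (norm X ^2 - norm X' ^2 - norm dx ^2) / t"
    using polx t_pos by (simp add: field_simps)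
  have tt2: "(norm X ^2 - norm X' ^2 - norm dx ^2) / t = norm X^2 / t - norm X'^2 / t - 1/t * norm dx^2"
    by (simp add: diff_divide_distrib)
  have tt3: "(1/t - L/2) * norm dx^2 = 1/t * norm dx^2 - L/2 * norm dx^2" by (simp add: algebra_simps)
  show ?thesis using W0 W1 Q mg mhs coco sumT sumT2 split tt tt2 tt3 by argo
qed

end

context cvsetup begin

lemma sum_sn_bound: "(\<Sum>i<m. s i * (onorm (B i))^2) < 1/t - L/2"
proof -
  define N where "N = (\<Sum>i<m. w i * (onorm (B i))^2)"
  have "(\<Sum>i<m. s i * (onorm (B i))^2) = \<sigma> / \<gamma> * N"
    unfolding s_def N_def sum_distrib_left by (intro sum.cong) auto
  moreover have "\<sigma> / \<gamma> * N < 1 / (\<tau> * \<gamma>)"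
  proof -
    have "\<sigma> * \<tau> * N < 1" using step_cond unfolding N_def .
    then have "\<sigma> * N < 1 / \<tau>" using tau_pos by (simp add: field_simps)
    then show ?thesis using gamma_range tau_pos by (simp add: field_simps)
  qed
  moreover have "L / 2 < 1 / \<gamma>" using gamma_range L_pos by (simp add: field_simps)
  moreover have "1/t = (1 + \<tau>) / (\<tau> * \<gamma>)" unfolding t_def by simp
  moreover have "(1 + \<tau>) / (\<tau> * \<gamma>) = 1 / (\<tau> * \<gamma>) + 1 / \<gamma>" using tau_pos gamma_range
    by (simp add: field_simps)
  ultimately show ?thesis by argo
qed

lemma eps_W: "\<exists>\<epsilon>>0. \<forall>a b k. \<epsilon> * (norm (x k - a)^2 + (\<Sum>i<m. norm (v k i - b i)^2)) \<le> Wf a b k"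
proof -
  have "(\<Sum>i<m. s i * (onorm (B i))^2) < 1/t" using sum_sn_bound L_pos by argo
  then have "\<exists>\<epsilon>>0. \<forall>dx dv. \<epsilon> * (norm dx^2 + (\<Sum>i<m. norm (dv i)^2))
      \<le> 1/t * norm dx^2 + (\<Sum>i<m. norm (dv i)^2 / s i - 2 * inner (dv i) (B i dx))"
    by (intro quad_pos[where m=m and B=B and s=s and c="1/t"] B_lin s_pos)
  then obtain \<epsilon> where e: "\<epsilon> > 0" and H: "\<And>dx dv. \<epsilon> * (norm dx^2 + (\<Sum>i<m. norm (dv i)^2))
      \<le> 1/t * norm dx^2 + (\<Sum>i<m. norm (dv i)^2 / s i - 2 * inner (dv i) (B i dx))" by blast
  have "\<epsilon> * (norm (x k - a)^2 + (\<Sum>i<m. norm (v k i - b i)^2)) \<le> Wf a b k" for a b k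
  proof -
    have "1/t * norm (x k - a)^2 = norm (x k - a)^2 / t" by simp
    then show ?thesis using H[of "x k - a" "\<lambda>i. v k i - b i"] unfolding Wf_def by argo
  qed
  then show ?thesis using e by blast
qed

lemma eps_Q: "\<exists>\<epsilon>>0. \<forall>k. \<epsilon> * (norm (x (Suc k) - x k)^2 + (\<Sum>i<m. norm (v (Suc k) i - v k i)^2)) \<le> Qf k"
proof -
  have "\<exists>\<epsilon>>0. \<forall>dx dv. \<epsilon> * (norm dx^2 + (\<Sum>i<m. norm (dv i)^2))
      \<le> (1/t - L/2) * norm dx^2 + (\<Sum>i<m. norm (dv i)^2 / s i - 2 * inner (dv i) (B i dx))"
    by (intro quad_pos[where m=m and B=B and s=s and c="1/t - L/2"] B_lin s_pos sum_sn_bound)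
  then obtain \<epsilon> where e: "\<epsilon> > 0" and H: "\<And>dx dv. \<epsilon> * (norm dx^2 + (\<Sum>i<m. norm (dv i)^2))
      \<le> (1/t - L/2) * norm dx^2 + (\<Sum>i<m. norm (dv i)^2 / s i - 2 * inner (dv i) (B i dx))" by blast
  show ?thesis unfolding Qf_def using e H[of "x (Suc _) - x _" "\<lambda>i. v (Suc _) i - v _ i"] by blast
qed

lemma W_nonneg: "0 \<le> Wf a b k"
proof -
  obtain \<epsilon> where e: "\<epsilon> > 0" "\<And>a b k. \<epsilon> * (norm (x k - a)^2 + (\<Sum>i<m. norm (v k i - b i)^2)) \<le> Wf a b k"
    using eps_W by blast
  have "0 \<le> \<epsilon> * (norm (x k - a)^2 + (\<Sum>i<m. norm (v k i - b i)^2))"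
    using e(1) by (intro mult_nonneg_nonneg add_nonneg_nonneg sum_nonneg) auto
  then show ?thesis using e(2)[where a=a and b=b and k=k] by argo
qed

lemma Q_nonneg: "0 \<le> Qf k"
proof -
  obtain \<epsilon> where e: "\<epsilon> > 0" "\<And>k. \<epsilon> * (norm (x (Suc k) - x k)^2 + (\<Sum>i<m. norm (v (Suc k) i - v k i)^2)) \<le> Qf k"
    using eps_Q by blast
  have "0 \<le> \<epsilon> * (norm (x (Suc k) - x k)^2 + (\<Sum>i<m. norm (v (Suc k) i - v k i)^2))"
    using e(1) by (intro mult_nonneg_nonneg add_nonneg_nonneg sum_nonneg) auto
  then show ?thesis using e(2)[of k] by argo
qed

lemma W_conv: "KKT a b \<Longrightarrow> convergent (\<lambda>k. Wf a b k)"
proof -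
  assume K: "KKT a b"
  have mono: "antimono_on UNIV (\<lambda>k. Wf a b k)" unfolding decseq_Suc_iff
  proof
    fix n
    show "Wf a b (Suc n) \<le> Wf a b n" using lyap[OF K, of n] Q_nonneg[of n] by argo
  qed
  obtain l where "(\<lambda>k. Wf a b k) \<longlonglongrightarrow> l"
    by (rule decseq_convergent[OF mono, where B=0]) (use W_nonneg in auto)
  then show ?thesis unfolding convergent_def by blast
qed

lemma Q_null: "Qf \<longlonglongrightarrow> 0"
proof -
  obtain a b where K: "KKT a b" using KKT_exists by blast
  have tel: "(\<Sum>k<n. Qf k) \<le> Wf a b 0 - Wf a b n" for n
  proof (induction n)
    case 0 then show ?case by simp
  next
    case (Suc n) then show ?case using lyap[OF K, of n] by simp
  qed
  have "(\<Sum>k<n. Qf k) \<le> Wf a b 0" for n using tel[of n] W_nonneg[of a b n] by argo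
  then have "summable Qf" using Q_nonneg by (intro summableI_nonneg_bounded) auto
  then show ?thesis by (rule summable_LIMSEQ_zero)
qed

lemma dx_null: "(\<lambda>k. x (Suc k) - x k) \<longlonglongrightarrow> 0"
  and dv_null: "i < m \<Longrightarrow> (\<lambda>k. v (Suc k) i - v k i) \<longlonglongrightarrow> 0"
proof -
  obtain \<epsilon> where e: "\<epsilon> > 0" "\<And>k. \<epsilon> * (norm (x (Suc k) - x k)^2 + (\<Sum>i<m. norm (v (Suc k) i - v k i)^2)) \<le> Qf k"
    using eps_Q by blast
  have g0: "(\<lambda>k. sqrt (Qf k / \<epsilon>)) \<longlonglongrightarrow> 0"
    using tendsto_real_sqrt[OF tendsto_divide[OF Q_null tendsto_const, of \<epsilon>]] e(1) by simp
  have bx: "norm (x (Suc k) - x k) \<le> sqrt (Qf k / \<epsilon>)" for k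
  proof -
    have S0: "0 \<le> \<epsilon> * (\<Sum>i<m. norm (v (Suc k) i - v k i)^2)" using e(1) by (intro mult_nonneg_nonneg sum_nonneg) auto
    have "\<epsilon> * (norm (x (Suc k) - x k)^2 + (\<Sum>i<m. norm (v (Suc k) i - v k i)^2))
       = \<epsilon> * norm (x (Suc k) - x k)^2 + \<epsilon> * (\<Sum>i<m. norm (v (Suc k) i - v k i)^2)" by (simp add: distrib_left)
    then have "\<epsilon> * norm (x (Suc k) - x k)^2 \<le> Qf k"
      using e(2)[of k] S0 by argo
    then have "norm (x (Suc k) - x k)^2 \<le> Qf k / \<epsilon>" using e(1) by (simp add: field_simps)
    then show ?thesis by (simp add: real_le_rsqrt)
  qed
  show "(\<lambda>k. x (Suc k) - x k) \<longlonglongrightarrow> 0"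
    by (rule Lim_null_comparison[OF _ g0]) (use bx in auto)
  assume i: "i < m"
  have bv: "norm (v (Suc k) i - v k i) \<le> sqrt (Qf k / \<epsilon>)" for k
  proof -
    have "norm (v (Suc k) i - v k i)^2 \<le> (\<Sum>i<m. norm (v (Suc k) i - v k i)^2)"
      using i by (intro member_le_sum) auto
    then have 1: "\<epsilon> * norm (v (Suc k) i - v k i)^2 \<le> \<epsilon> * (\<Sum>i<m. norm (v (Suc k) i - v k i)^2)"
      using e(1) by (intro mult_left_mono) auto
    have 2: "0 \<le> \<epsilon> * norm (x (Suc k) - x k)^2" using e(1) by simp
    have "\<epsilon> * (norm (x (Suc k) - x k)^2 + (\<Sum>i<m. norm (v (Suc k) i - v k i)^2))
       = \<epsilon> * norm (x (Suc k) - x k)^2 + \<epsilon> * (\<Sum>i<m. norm (v (Suc k) i - v k i)^2)" by (simp add: distrib_left)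
    then have "\<epsilon> * norm (v (Suc k) i - v k i)^2 \<le> Qf k"
      using e(2)[of k] 1 2 by argo
    then have "norm (v (Suc k) i - v k i)^2 \<le> Qf k / \<epsilon>" using e(1) by (simp add: field_simps)
    then show ?thesis by (simp add: real_le_rsqrt)
  qed
  show "(\<lambda>k. v (Suc k) i - v k i) \<longlonglongrightarrow> 0"
    by (rule Lim_null_comparison[OF _ g0]) (use bv in auto)
qed

lemma bounded_iter: "\<exists>C. \<forall>k. norm (x k) \<le> C \<and> (\<forall>i<m. norm (v k i) \<le> C)"
proof -
  obtain a b where K: "KKT a b" using KKT_exists by blast
  obtain \<epsilon> where e: "\<epsilon> > 0" "\<And>a b k. \<epsilon> * (norm (x k - a)^2 + (\<Sum>i<m. norm (v k i - b i)^2)) \<le> Wf a b k"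
    using eps_W by blast
  have Wdec: "Wf a b k \<le> Wf a b 0" for k
  proof (induction k)
    case (Suc k) then show ?case using lyap[OF K, of k] Q_nonneg[of k] by argo
  qed simp
  define R where "R = sqrt (Wf a b 0 / \<epsilon>)"
  define C where "C = R + norm a + (\<Sum>i<m. norm (b i))"
  have S0: "0 \<le> (\<Sum>i<m. norm (v k i - b i)^2)" for k by (intro sum_nonneg) auto
  have bx: "norm (x k - a) \<le> R" and bv: "\<forall>i<m. norm (v k i - b i) \<le> R" for k
  proof -
    have E: "\<epsilon> * (norm (x k - a)^2 + (\<Sum>i<m. norm (v k i - b i)^2)) \<le> Wf a b 0"
      using e(2)[of k a b] Wdec[of k] by argo
    have "norm (x k - a)^2 + (\<Sum>i<m. norm (v k i - b i)^2) \<le> Wf a b 0 / \<epsilon>"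
      using E e(1) by (simp add: field_simps)
    then have 1: "norm (x k - a)^2 \<le> Wf a b 0 / \<epsilon>" using S0[of k] by argo
    show "norm (x k - a) \<le> R" unfolding R_def using 1 by (simp add: real_le_rsqrt)
    show "\<forall>i<m. norm (v k i - b i) \<le> R"
    proof (intro allI impI)
      fix i assume i: "i < m"
      have "norm (v k i - b i)^2 \<le> (\<Sum>i<m. norm (v k i - b i)^2)" using i by (intro member_le_sum) auto
      then have "norm (v k i - b i)^2 \<le> Wf a b 0 / \<epsilon>"
        using \<open>norm (x k - a)^2 + _ \<le> _\<close> zero_le_power2[of "norm (x k - a)"] by argo
      then show "norm (v k i - b i) \<le> R" unfolding R_def by (simp add: real_le_rsqrt)
    qed
  qed
  have "norm (x k) \<le> C \<and> (\<forall>i<m. norm (v k i) \<le> C)" for k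
  proof
    have "norm (x k) \<le> norm (x k - a) + norm a" using norm_triangle_sub[of "x k" a] by simp
    moreover have "0 \<le> (\<Sum>i<m. norm (b i))" by (intro sum_nonneg) auto
    ultimately show "norm (x k) \<le> C" using bx[of k] unfolding C_def by argo
    show "\<forall>i<m. norm (v k i) \<le> C"
    proof (intro allI impI)
      fix i assume i: "i < m"
      have "norm (v k i) \<le> norm (v k i - b i) + norm (b i)" using norm_triangle_sub[of "v k i" "b i"] by simp
      moreover have "norm (b i) \<le> (\<Sum>i<m. norm (b i))" using i by (intro member_le_sum) auto
      moreover have "0 \<le> norm a" by simp
      moreover have "0 \<le> R" unfolding R_def using W_nonneg[of a b 0] e(1) by simp
      moreover have "norm (v k i - b i) \<le> R" using bv[of k] i by blast
      ultimately show "norm (v k i) \<le> C" unfolding C_def by argo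
    qed
  qed
  then show ?thesis by blast
qed

end

lemma inner_null:
  fixes p q :: "nat \<Rightarrow> 'a::real_inner"
  assumes "\<And>k. norm (p k) \<le> K" "q \<longlonglongrightarrow> 0"
  shows "(\<lambda>k. inner (p k) (q k)) \<longlonglongrightarrow> 0"
proof (rule Lim_null_comparison)
  show "\<forall>\<^sub>F k in sequentially. norm (inner (p k) (q k)) \<le> K * norm (q k)"
  proof (intro always_eventually allI)
    fix k
    have "norm (inner (p k) (q k)) \<le> norm (p k) * norm (q k)" using Cauchy_Schwarz_ineq2 by simp
    also have "\<dots> \<le> K * norm (q k)" using assms(1) by (intro mult_right_mono) auto
    finally show "norm (inner (p k) (q k)) \<le> K * norm (q k)" .
  qed
  have "(\<lambda>k. norm (q k)) \<longlonglongrightarrow> 0" using assms(2) by (simp add: tendsto_norm_zero)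
  then show "(\<lambda>k. K * norm (q k)) \<longlonglongrightarrow> 0" using tendsto_mult_right_zero by blast
qed

lemma weak_shift:
  assumes "weakly_converges p l" "(\<lambda>n. q n - p n) \<longlonglongrightarrow> 0"
  shows "weakly_converges q l"
  unfolding weakly_converges_def
proof
  fix z
  have 1: "(\<lambda>n. inner (p n) z) \<longlonglongrightarrow> inner l z" using assms(1) unfolding weakly_converges_def by blast
  have 2: "(\<lambda>n. inner (q n - p n) z) \<longlonglongrightarrow> inner 0 z" by (intro tendsto_inner assms(2) tendsto_const)
  have "(\<lambda>n. inner (p n) z + inner (q n - p n) z) \<longlonglongrightarrow> inner l z + inner 0 z"
    by (rule tendsto_add[OF 1 2])
  then show "(\<lambda>n. inner (q n) z) \<longlonglongrightarrow> inner l z" by (simp add: inner_diff_left)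
qed

lemma weak_inner: "weakly_converges p l \<Longrightarrow> (\<lambda>n. inner c (p n)) \<longlonglongrightarrow> inner c l"
  unfolding weakly_converges_def by (simp add: inner_commute)

context cvsetup begin

lemma cluster_KKT:
  assumes r: "strict_mono r" and wx: "weakly_converges (\<lambda>n. x (r n)) xb"
    and wv: "\<And>i. i < m \<Longrightarrow> weakly_converges (\<lambda>n. v (r n) i) (vb i)"
    and vbV: "\<And>i. i < m \<Longrightarrow> vb i \<in> V i"
  shows "KKT xb vb"
proof -
  define lam where "lam = 1 / (2 * L)"
  have lam0: "0 < lam" unfolding lam_def using L_pos by simp
  define ab where "ab = xb - lam *\<^sub>R (Df xb + (\<Sum>i<m. Bt i (vb i)))"
  define a where "a = prox_on UNIV lam g ab"
  define \<alpha> where "\<alpha> = (1 / lam) *\<^sub>R (ab - a)"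
  have \<alpha>sub: "\<alpha> \<in> subdiff_on UNIV g a"
    using prox_subdiff[OF g_G0 subspace_UNIV closed_UNIV lam0 UNIV_I, of ab] unfolding \<alpha>_def a_def by simp
  define bb where "bb i = B i xb + vb i" for i
  define b where "b i = prox_on (V i) 1 (h i) (bb i)" for i
  define \<beta> where "\<beta> i = bb i - b i" for i
  have bbV: "bb i \<in> V i" if "i < m" for i
    unfolding bb_def using that B_range vbV Vs by (intro subspace_add) auto
  have bsub: "b i \<in> V i \<and> \<beta> i \<in> subdiff_on (V i) (h i) (b i)" if i: "i < m" for i
    using prox_subdiff[OF h_G0[OF i] Vs[OF i] Vc[OF i] zero_less_one bbV[OF i]]
    unfolding \<beta>_def b_def by simp
  define X where "X n = x (r n)" for n
  define X' where "X' n = x (Suc (r n))" for n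
  define Vv where "Vv n i = v (r n) i" for n i
  define Vv' where "Vv' n i = v (Suc (r n)) i" for n i
  define DX where "DX n = X' n - X n" for n
  define DV where "DV n i = Vv' n i - Vv n i" for n i
  have DXnull: "DX \<longlonglongrightarrow> 0" unfolding DX_def X_def X'_def
    using LIMSEQ_subseq_LIMSEQ[OF dx_null r] by (simp add: o_def)
  have DVnull: "(\<lambda>n. DV n i) \<longlonglongrightarrow> 0" if "i < m" for i unfolding DV_def Vv_def Vv'_def
    using LIMSEQ_subseq_LIMSEQ[OF dv_null[OF that] r] by (simp add: o_def)
  have wX: "weakly_converges X xb" using wx unfolding X_def .
  have wX': "weakly_converges X' xb" using weak_shift[OF wX] DXnull unfolding DX_def by simp
  have wV: "weakly_converges (\<lambda>n. Vv n i) (vb i)" if "i < m" for i using wv[OF that] unfolding Vv_def .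
  have wV': "weakly_converges (\<lambda>n. Vv' n i) (vb i)" if "i < m" for i
    using weak_shift[OF wV[OF that]] DVnull[OF that] unfolding DV_def by simp
  obtain C where C: "\<And>k. norm (x k) \<le> C" "\<And>k i. i < m \<Longrightarrow> norm (v k i) \<le> C"
    using bounded_iter by blast
  define Lin0 where "Lin0 n = - inner (Df a) (X n - a) - inner \<alpha> (X' n - a)" for n
  define R0 where "R0 n = inner (X n - X' n) (X' n - a) / t - inner (Df (X n)) (DX n)" for n
  define LinS where "LinS n = (\<Sum>i<m. inner (Vv n i) (B i a) - inner (Vv' n i) (b i) - inner (\<beta> i) (B i (X' n)) + inner (\<beta> i) (b i))" for n
  define RS where "RS n = (\<Sum>i<m. inner (DV n i) (B i (X' n)) + inner (Vv' n i - \<beta> i) (B i (DX n))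
       - inner (Vv' n i - \<beta> i) (DV n i) / s i)" for n
  have ineq: "0 \<le> Lin0 n + R0 n + LinS n + RS n" for n
  proof -
    define k where "k = r n"
    have mg: "0 \<le> inner (u k - \<alpha>) (x (Suc k) - a)"
      by (rule subdiff_mono[OF u_sub \<alpha>sub]) auto
    have mh: "0 \<le> inner (v (Suc k) i - \<beta> i) (P k i - b i)" if i: "i < m" for i
      using subdiff_mono[OF conjunct2[OF P_sub[OF i]] conjunct2[OF bsub[OF i]]
          conjunct1[OF P_sub[OF i]] conjunct1[OF bsub[OF i]]] .
    have mhs: "0 \<le> (\<Sum>i<m. inner (v (Suc k) i - \<beta> i) (P k i - b i))"
      using mh by (intro sum_nonneg) auto
    have eg: "inner (u k - \<alpha>) (x (Suc k) - a) = inner (X n - X' n) (X' n - a) / t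
        - inner (Df (X n)) (X' n - a) - (\<Sum>i<m. inner (Vv n i) (B i (X' n - a))) - inner \<alpha> (X' n - a)"
      unfolding X_def X'_def Vv_def k_def by (simp add: inner_diff_left inner_u)
    have mono: "inner (Df (X n) - Df a) (X n - a) \<ge> 0"
      using cocoercive[OF f_conv f_grad Df_lip L_pos, of "X n" a] L_pos
      by (meson divide_nonneg_pos order_trans zero_le_power2)
    have edf: "inner (Df (X n)) (X' n - a) = inner (Df (X n)) (X n - a) + inner (Df (X n)) (DX n)"
      unfolding DX_def by (simp add: inner_diff_right)
    have edf2: "inner (Df (X n) - Df a) (X n - a) = inner (Df (X n)) (X n - a) - inner (Df a) (X n - a)"
      by (simp add: inner_diff_left)
    have per: "- inner (Vv n i) (B i (X' n - a)) + inner (v (Suc k) i - \<beta> i) (P k i - b i)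
        = (inner (Vv n i) (B i a) - inner (Vv' n i) (b i) - inner (\<beta> i) (B i (X' n)) + inner (\<beta> i) (b i))
        + (inner (DV n i) (B i (X' n)) + inner (Vv' n i - \<beta> i) (B i (DX n))
           - inner (Vv' n i - \<beta> i) (DV n i) / s i)" if i: "i < m" for i
    proof -
      have Pe: "P k i - b i = (B i (X' n) - b i) + B i (DX n) - (1 / s i) *\<^sub>R DV n i"
        unfolding P_eq[OF i] X'_def DX_def DV_def Vv'_def Vv_def X_def k_def by (simp add: algebra_simps)
      have e1: "inner (v (Suc k) i - \<beta> i) (P k i - b i) = inner (Vv' n i) (B i (X' n)) - inner (Vv' n i) (b i)
          - inner (\<beta> i) (B i (X' n)) + inner (\<beta> i) (b i) + inner (Vv' n i - \<beta> i) (B i (DX n))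
          - inner (Vv' n i - \<beta> i) (DV n i) / s i"
        unfolding Pe Vv'_def[symmetric] k_def[symmetric]
        by (simp add: inner_diff_left inner_diff_right inner_add_right Vv'_def k_def)
      have e2: "inner (Vv n i) (B i (X' n - a)) = inner (Vv n i) (B i (X' n)) - inner (Vv n i) (B i a)"
        by (simp add: B_diff[OF i] inner_diff_right)
      have e3: "inner (DV n i) (B i (X' n)) = inner (Vv' n i) (B i (X' n)) - inner (Vv n i) (B i (X' n))"
        unfolding DV_def by (simp add: inner_diff_left)
      show ?thesis using e1 e2 e3 by argo
    qed
    have sper: "- (\<Sum>i<m. inner (Vv n i) (B i (X' n - a))) + (\<Sum>i<m. inner (v (Suc k) i - \<beta> i) (P k i - b i))
        = LinS n + RS n"
    proof -
      have "- (\<Sum>i<m. inner (Vv n i) (B i (X' n - a))) + (\<Sum>i<m. inner (v (Suc k) i - \<beta> i) (P k i - b i))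
          = (\<Sum>i<m. - inner (Vv n i) (B i (X' n - a)) + inner (v (Suc k) i - \<beta> i) (P k i - b i))"
        by (simp add: sum.distrib sum_negf sum_subtractf)
      also have "\<dots> = (\<Sum>i<m. (inner (Vv n i) (B i a) - inner (Vv' n i) (b i) - inner (\<beta> i) (B i (X' n)) + inner (\<beta> i) (b i))
        + (inner (DV n i) (B i (X' n)) + inner (Vv' n i - \<beta> i) (B i (DX n))
           - inner (Vv' n i - \<beta> i) (DV n i) / s i))"
        using per by (intro sum.cong) auto
      also have "\<dots> = LinS n + RS n" unfolding LinS_def RS_def by (simp add: sum.distrib)
      finally show ?thesis .
    qed
    show ?thesis using mg mhs eg mono edf edf2 sper unfolding Lin0_def R0_def by argo
  qed
  have lim_Lin0: "Lin0 \<longlonglongrightarrow> - inner (Df a) (xb - a) - inner \<alpha> (xb - a)"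
    unfolding Lin0_def inner_diff_right
    by (intro tendsto_intros weak_inner wX wX')
  have lim_LinS: "LinS \<longlonglongrightarrow> (\<Sum>i<m. inner (vb i) (B i a) - inner (vb i) (b i) - inner (\<beta> i) (B i xb) + inner (\<beta> i) (b i))"
    unfolding LinS_def
  proof (intro tendsto_sum)
    fix i assume "i \<in> {..<m}"
    then have i: "i < m" by simp
    have 1: "(\<lambda>n. inner (Vv n i) (B i a)) \<longlonglongrightarrow> inner (vb i) (B i a)"
      using wV[OF i] unfolding weakly_converges_def by blast
    have 2: "(\<lambda>n. inner (Vv' n i) (b i)) \<longlonglongrightarrow> inner (vb i) (b i)"
      using wV'[OF i] unfolding weakly_converges_def by blast
    have "(\<lambda>n. inner (X' n) (Bt i (\<beta> i))) \<longlonglongrightarrow> inner xb (Bt i (\<beta> i))"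
      using wX' unfolding weakly_converges_def by blast
    then have 3: "(\<lambda>n. inner (\<beta> i) (B i (X' n))) \<longlonglongrightarrow> inner (\<beta> i) (B i xb)"
      by (simp add: adj[OF i, symmetric] inner_commute)
    show "(\<lambda>n. inner (Vv n i) (B i a) - inner (Vv' n i) (b i) - inner (\<beta> i) (B i (X' n)) + inner (\<beta> i) (b i))
        \<longlonglongrightarrow> inner (vb i) (B i a) - inner (vb i) (b i) - inner (\<beta> i) (B i xb) + inner (\<beta> i) (b i)"
      by (intro tendsto_intros 1 2 3)
  qed
  have nB: "norm (B i z) \<le> onorm (B i) * norm z" if "i < m" for i z by (rule onorm[OF B_lin[OF that]])
  have lim_R0: "R0 \<longlonglongrightarrow> 0"
  proof -
    have 1: "(\<lambda>n. inner (X' n - a) (X n - X' n)) \<longlonglongrightarrow> 0"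
    proof (rule inner_null)
      show "norm (X' n - a) \<le> C + norm a" for n
        using C(1)[of "Suc (r n)"] norm_triangle_ineq4[of "X' n" a] unfolding X'_def by argo
      have "(\<lambda>n. - DX n) \<longlonglongrightarrow> - 0" by (intro tendsto_minus DXnull)
      then show "(\<lambda>n. X n - X' n) \<longlonglongrightarrow> 0" unfolding DX_def by simp
    qed
    have 2: "(\<lambda>n. inner (Df (X n)) (DX n)) \<longlonglongrightarrow> 0"
    proof (rule inner_null[OF _ DXnull])
      fix n
      have "norm (Df (X n)) \<le> norm (Df 0) + norm (Df (X n) - Df 0)" using norm_triangle_sub[of "Df (X n)" "Df 0"] by simp
      also have "\<dots> \<le> norm (Df 0) + L * C"
        using Df_lip[of "X n" 0] C(1)[of "r n"] L_pos unfolding X_def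
        by (smt (verit) diff_zero mult_left_mono)
      finally show "norm (Df (X n)) \<le> norm (Df 0) + L * C" .
    qed
    have "(\<lambda>n. inner (X' n - a) (X n - X' n) / t - inner (Df (X n)) (DX n)) \<longlonglongrightarrow> 0 / t - 0"
      using t_pos by (intro tendsto_intros 1 2) auto
    then show ?thesis unfolding R0_def by (simp add: inner_commute)
  qed
  have lim_RS: "RS \<longlonglongrightarrow> 0" unfolding RS_def
  proof (intro tendsto_null_sum)
    fix i assume "i \<in> {..<m}"
    then have i: "i < m" by simp
    have bV': "norm (Vv' n i - \<beta> i) \<le> C + norm (\<beta> i)" for n
      using C(2)[OF i, of "Suc (r n)"] norm_triangle_ineq4[of "Vv' n i" "\<beta> i"] unfolding Vv'_def by argo
    have 1: "(\<lambda>n. inner (DV n i) (B i (X' n))) \<longlonglongrightarrow> 0"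
    proof -
      have "(\<lambda>n. inner (B i (X' n)) (DV n i)) \<longlonglongrightarrow> 0"
      proof (rule inner_null[OF _ DVnull[OF i]])
        fix n
        have "norm (B i (X' n)) \<le> onorm (B i) * norm (X' n)" by (rule nB[OF i])
        also have "\<dots> \<le> onorm (B i) * C" using C(1) unfolding X'_def
          by (intro mult_left_mono onorm_pos_le B_lin[OF i])
        finally show "norm (B i (X' n)) \<le> onorm (B i) * C" .
      qed
      then show ?thesis by (simp add: inner_commute)
    qed
    have BDX: "(\<lambda>n. B i (DX n)) \<longlonglongrightarrow> 0"
      using bounded_linear.tendsto[OF B_lin[OF i] DXnull] linear_0[OF bounded_linear.linear[OF B_lin[OF i]]] by simp
    have 2: "(\<lambda>n. inner (Vv' n i - \<beta> i) (B i (DX n))) \<longlonglongrightarrow> 0"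
      by (rule inner_null[OF bV' BDX])
    have 3: "(\<lambda>n. inner (Vv' n i - \<beta> i) (DV n i)) \<longlonglongrightarrow> 0"
      by (rule inner_null[OF bV' DVnull[OF i]])
    have "(\<lambda>n. inner (DV n i) (B i (X' n)) + inner (Vv' n i - \<beta> i) (B i (DX n))
           - inner (Vv' n i - \<beta> i) (DV n i) / s i) \<longlonglongrightarrow> 0 + 0 - 0 / s i"
      using s_pos[OF i] by (intro tendsto_intros 1 2 3) auto
    then show "(\<lambda>n. inner (DV n i) (B i (X' n)) + inner (Vv' n i - \<beta> i) (B i (DX n))
           - inner (Vv' n i - \<beta> i) (DV n i) / s i) \<longlonglongrightarrow> 0" by simp
  qed
  define LinSb where "LinSb = (\<Sum>i<m. inner (vb i) (B i a) - inner (vb i) (b i) - inner (\<beta> i) (B i xb) + inner (\<beta> i) (b i))"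
  have "(\<lambda>n. Lin0 n + R0 n + LinS n + RS n) \<longlonglongrightarrow> (- inner (Df a) (xb - a) - inner \<alpha> (xb - a)) + 0 + LinSb + 0"
    unfolding LinSb_def by (intro tendsto_add lim_Lin0 lim_R0 lim_LinS lim_RS)
  then have main: "0 \<le> - inner (Df a) (xb - a) - inner \<alpha> (xb - a) + LinSb"
    using ineq by (intro LIMSEQ_le_const[where a=0]) auto
  have ealpha: "inner \<alpha> (xb - a) = norm (xb - a)^2 / lam - inner (Df xb) (xb - a) - (\<Sum>i<m. inner (vb i) (B i (xb - a)))"
  proof -
    have "\<alpha> = (1 / lam) *\<^sub>R (xb - a) - (Df xb + (\<Sum>i<m. Bt i (vb i)))"
      unfolding \<alpha>_def ab_def using lam0 by (simp add: algebra_simps)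
    then show ?thesis by (simp add: inner_diff_left inner_add_left inner_sum_Bt power2_norm_eq_inner)
  qed
  have eLinS: "LinSb = - (\<Sum>i<m. inner (vb i) (B i (xb - a))) - (\<Sum>i<m. norm (B i xb - b i)^2)"
  proof -
    have "LinSb = (\<Sum>i<m. - inner (vb i) (B i (xb - a)) - norm (B i xb - b i)^2)"
      unfolding LinSb_def
    proof (intro sum.cong refl)
      fix i assume "i \<in> {..<m}"
      then have i: "i < m" by simp
      have be: "\<beta> i = (B i xb - b i) + vb i" unfolding \<beta>_def bb_def by simp
      show "inner (vb i) (B i a) - inner (vb i) (b i) - inner (\<beta> i) (B i xb) + inner (\<beta> i) (b i)
          = - inner (vb i) (B i (xb - a)) - norm (B i xb - b i)^2"
        unfolding be B_diff[OF i] by (simp add: inner_diff_left inner_diff_right inner_add_left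
            power2_norm_eq_inner inner_commute algebra_simps)
    qed
    then show ?thesis by (simp add: sum_subtractf sum_negf)
  qed
  have lipb: "inner (Df xb - Df a) (xb - a) \<le> L * norm (xb - a)^2"
  proof -
    have "inner (Df xb - Df a) (xb - a) \<le> norm (Df xb - Df a) * norm (xb - a)" by (rule norm_cauchy_schwarz)
    also have "\<dots> \<le> L * norm (xb - a) * norm (xb - a)" using Df_lip[of xb a] by (intro mult_right_mono) auto
    finally show ?thesis by (simp add: power2_eq_square mult.assoc)
  qed
  have lamL: "norm (xb - a)^2 / lam = 2 * L * norm (xb - a)^2" unfolding lam_def by simp
  have edfx: "inner (Df xb - Df a) (xb - a) = inner (Df xb) (xb - a) - inner (Df a) (xb - a)"
    by (simp add: inner_diff_left)
  have Sn: "0 \<le> (\<Sum>i<m. norm (B i xb - b i)^2)" by (intro sum_nonneg) auto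
  have "0 \<le> - L * norm (xb - a)^2 - (\<Sum>i<m. norm (B i xb - b i)^2)"
    using main ealpha eLinS lipb lamL edfx by argo
  moreover have "0 \<le> L * norm (xb - a)^2" using L_pos by simp
  ultimately have z1: "L * norm (xb - a)^2 = 0" and z2: "(\<Sum>i<m. norm (B i xb - b i)^2) = 0"
    using Sn by argo+
  have axb: "a = xb" using z1 L_pos by simp
  have bxb: "b i = B i xb" if i: "i < m" for i
  proof -
    have "\<forall>j\<in>{..<m}. norm (B j xb - b j)^2 = 0" using z2 by (subst (asm) sum_nonneg_eq_0_iff) auto
    then show ?thesis using i by simp
  qed
  have "\<alpha> = - Df xb - (\<Sum>i<m. Bt i (vb i))"
    unfolding \<alpha>_def ab_def axb[symmetric] using lam0 by (simp add: algebra_simps axb)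
  then have g1: "- Df xb - (\<Sum>i<m. Bt i (vb i)) \<in> subdiff_on UNIV g xb" using \<alpha>sub axb by simp
  have h1: "vb i \<in> subdiff_on (V i) (h i) (B i xb)" if i: "i < m" for i
    using bsub[OF i] bxb[OF i] unfolding \<beta>_def bb_def by simp
  show ?thesis unfolding KKT_def using g1 h1 by blast
qed

end

context cvsetup begin

lemma quadW: "\<exists>\<epsilon>>0. \<forall>dx dv. \<epsilon> * (norm dx^2 + (\<Sum>i<m. norm (dv i)^2))
      \<le> 1/t * norm dx^2 + (\<Sum>i<m. norm (dv i)^2 / s i - 2 * inner (dv i) (B i dx))"
proof -
  have "(\<Sum>i<m. s i * (onorm (B i))^2) < 1/t" using sum_sn_bound L_pos by argo
  then show ?thesis by (intro quad_pos[where m=m and B=B and s=s and c="1/t"] B_lin s_pos)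
qed

lemma cluster_exists:
  fixes q :: "nat \<Rightarrow> nat"
  assumes q: "strict_mono q"
  shows "\<exists>r xb vb. strict_mono r \<and> weakly_converges (\<lambda>n. x (q (r n))) xb
     \<and> (\<forall>i<m. weakly_converges (\<lambda>n. v (q (r n)) i) (vb i)) \<and> KKT xb vb"
proof -
  obtain C where C: "\<And>k. norm (x k) \<le> C" "\<And>k i. i < m \<Longrightarrow> norm (v k i) \<le> C"
    using bounded_iter by blast
  obtain r1 xb where r1: "strict_mono r1" "weakly_converges (\<lambda>n. x (q (r1 n))) xb"
    using weak_compact[of "\<lambda>n. x (q n)" C] C(1) by blast
  obtain r2 vb where r2: "strict_mono r2" "\<forall>i<m. weakly_converges (\<lambda>n. v (q (r1 (r2 n))) i) (vb i)"
    using weak_compact_fam[of m "\<lambda>n i. v (q (r1 n)) i" C] C(2) by blast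
  define r where "r = r1 \<circ> r2"
  have rm: "strict_mono r" unfolding r_def using r1(1) r2(1) by (rule strict_mono_o)
  have wx: "weakly_converges (\<lambda>n. x (q (r n))) xb"
    using weakly_converges_subseq[OF r1(2) r2(1)] unfolding r_def by (simp add: o_def)
  have wv: "\<forall>i<m. weakly_converges (\<lambda>n. v (q (r n)) i) (vb i)" using r2(2) unfolding r_def by (simp add: o_def)
  have vbV: "vb i \<in> V i" if i: "i < m" for i
    using weak_limit_in_subspace[OF Vs[OF i] Vc[OF i], of "\<lambda>n. v (q (r n)) i"] vV[OF i] wv i by blast
  have qr: "strict_mono (q \<circ> r)" using q rm by (rule strict_mono_o)
  have "KKT xb vb"
    by (rule cluster_KKT[OF qr]) (use wx wv vbV in \<open>auto simp: o_def\<close>)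
  then show ?thesis using rm wx wv by blast
qed

definition "ell d e z wv = - 2 * inner z d / t + (\<Sum>i<m. - 2 * inner (wv i) (e i) / s i
      + 2 * inner (wv i) (B i d) + 2 * inner (e i) (B i z))"

lemma W_diff:
  "Wf a1 b1 k - Wf a2 b2 k = ell (a1 - a2) (\<lambda>i. b1 i - b2 i) (x k) (v k)
     + ((norm a1^2 - norm a2^2) / t + (\<Sum>i<m. (norm (b1 i)^2 - norm (b2 i)^2) / s i
        - 2 * inner (b1 i) (B i a1) + 2 * inner (b2 i) (B i a2)))"
proof -
  have px: "norm (x k - a1)^2 / t - norm (x k - a2)^2 / t = - 2 * inner (x k) (a1 - a2) / t + (norm a1^2 - norm a2^2) / t"
    by (simp add: norm_sq_diff inner_diff_right diff_divide_distrib add_divide_distrib algebra_simps)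
  have pi: "(norm (v k i - b1 i)^2 / s i - 2 * inner (v k i - b1 i) (B i (x k - a1)))
      - (norm (v k i - b2 i)^2 / s i - 2 * inner (v k i - b2 i) (B i (x k - a2)))
      = (- 2 * inner (v k i) (b1 i - b2 i) / s i + 2 * inner (v k i) (B i (a1 - a2)) + 2 * inner (b1 i - b2 i) (B i (x k)))
        + ((norm (b1 i)^2 - norm (b2 i)^2) / s i - 2 * inner (b1 i) (B i a1) + 2 * inner (b2 i) (B i a2))"
    if i: "i < m" for i
  proof -
    have 1: "norm (v k i - b1 i)^2 / s i - norm (v k i - b2 i)^2 / s i
        = - 2 * inner (v k i) (b1 i - b2 i) / s i + (norm (b1 i)^2 - norm (b2 i)^2) / s i"
      by (simp add: norm_sq_diff inner_diff_right diff_divide_distrib add_divide_distrib algebra_simps)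
    have 2: "inner (v k i - b1 i) (B i (x k - a1)) - inner (v k i - b2 i) (B i (x k - a2))
        = - inner (v k i) (B i (a1 - a2)) - inner (b1 i - b2 i) (B i (x k)) + inner (b1 i) (B i a1) - inner (b2 i) (B i a2)"
      by (simp add: B_diff[OF i] inner_diff_left inner_diff_right algebra_simps)
    show ?thesis using 1 2 by argo
  qed
  have "Wf a1 b1 k - Wf a2 b2 k = (norm (x k - a1)^2 / t - norm (x k - a2)^2 / t)
      + (\<Sum>i<m. (norm (v k i - b1 i)^2 / s i - 2 * inner (v k i - b1 i) (B i (x k - a1)))
      - (norm (v k i - b2 i)^2 / s i - 2 * inner (v k i - b2 i) (B i (x k - a2))))"
    unfolding Wf_def by (simp add: sum_subtractf)
  also have "\<dots> = (- 2 * inner (x k) (a1 - a2) / t + (norm a1^2 - norm a2^2) / t)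
      + (\<Sum>i<m. (- 2 * inner (v k i) (b1 i - b2 i) / s i + 2 * inner (v k i) (B i (a1 - a2)) + 2 * inner (b1 i - b2 i) (B i (x k)))
        + ((norm (b1 i)^2 - norm (b2 i)^2) / s i - 2 * inner (b1 i) (B i a1) + 2 * inner (b2 i) (B i a2)))"
    unfolding px using pi by (intro arg_cong2[where f="(+)"] sum.cong) auto
  also have "\<dots> = ell (a1 - a2) (\<lambda>i. b1 i - b2 i) (x k) (v k)
     + ((norm a1^2 - norm a2^2) / t + (\<Sum>i<m. (norm (b1 i)^2 - norm (b2 i)^2) / s i
        - 2 * inner (b1 i) (B i a1) + 2 * inner (b2 i) (B i a2)))"
    unfolding ell_def sum.distrib by argo
  finally show ?thesis .
qed

lemma ell_weak:
  assumes "weakly_converges p l" "\<And>i. i < m \<Longrightarrow> weakly_converges (\<lambda>n. wv n i) (wl i)"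
  shows "(\<lambda>n. ell d e (p n) (wv n)) \<longlonglongrightarrow> ell d e l wl"
proof -
  have 1: "(\<lambda>n. inner (p n) d) \<longlonglongrightarrow> inner l d" using assms(1) unfolding weakly_converges_def by blast
  have 2: "(\<lambda>n. - 2 * inner (wv n i) (e i) / s i + 2 * inner (wv n i) (B i d) + 2 * inner (e i) (B i (p n)))
     \<longlonglongrightarrow> - 2 * inner (wl i) (e i) / s i + 2 * inner (wl i) (B i d) + 2 * inner (e i) (B i l)"
    if "i \<in> {..<m}" for i
  proof -
    from that have i: "i < m" by simp
    have a: "(\<lambda>n. inner (wv n i) (e i)) \<longlonglongrightarrow> inner (wl i) (e i)" using assms(2)[OF i] unfolding weakly_converges_def by blast
    have b: "(\<lambda>n. inner (wv n i) (B i d)) \<longlonglongrightarrow> inner (wl i) (B i d)" using assms(2)[OF i] unfolding weakly_converges_def by blast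
    have "(\<lambda>n. inner (p n) (Bt i (e i))) \<longlonglongrightarrow> inner l (Bt i (e i))" using assms(1) unfolding weakly_converges_def by blast
    then have c: "(\<lambda>n. inner (e i) (B i (p n))) \<longlonglongrightarrow> inner (e i) (B i l)"
      by (simp add: adj[OF i, symmetric] inner_commute)
    show ?thesis using s_pos[OF i] by (intro tendsto_intros a b c) auto
  qed
  have "(\<lambda>n. - 2 * inner (p n) d / t + (\<Sum>i<m. - 2 * inner (wv n i) (e i) / s i
      + 2 * inner (wv n i) (B i d) + 2 * inner (e i) (B i (p n))))
      \<longlonglongrightarrow> - 2 * inner l d / t + (\<Sum>i<m. - 2 * inner (wl i) (e i) / s i
      + 2 * inner (wl i) (B i d) + 2 * inner (e i) (B i l))"
    using t_pos by (intro tendsto_add tendsto_divide tendsto_mult tendsto_const 1 tendsto_sum 2) auto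
  then show ?thesis unfolding ell_def .
qed

lemma ell_self: "ell d e a1 b1 - ell d e a2 b2 = ell d e (a1 - a2) (\<lambda>i. b1 i - b2 i)"
proof -
  have px: "- 2 * inner a1 d / t - - 2 * inner a2 d / t = - 2 * inner (a1 - a2) d / t"
    by (simp add: inner_diff_left diff_divide_distrib algebra_simps)
  have pi: "(- 2 * inner (b1 i) (e i) / s i + 2 * inner (b1 i) (B i d) + 2 * inner (e i) (B i a1))
      - (- 2 * inner (b2 i) (e i) / s i + 2 * inner (b2 i) (B i d) + 2 * inner (e i) (B i a2))
      = - 2 * inner (b1 i - b2 i) (e i) / s i + 2 * inner (b1 i - b2 i) (B i d) + 2 * inner (e i) (B i (a1 - a2))"
    if i: "i < m" for i
    by (simp add: inner_diff_left inner_diff_right B_diff[OF i] diff_divide_distrib algebra_simps)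
  have "(\<Sum>i<m. - 2 * inner (b1 i) (e i) / s i + 2 * inner (b1 i) (B i d) + 2 * inner (e i) (B i a1))
      - (\<Sum>i<m. - 2 * inner (b2 i) (e i) / s i + 2 * inner (b2 i) (B i d) + 2 * inner (e i) (B i a2))
      = (\<Sum>i<m. - 2 * inner (b1 i - b2 i) (e i) / s i + 2 * inner (b1 i - b2 i) (B i d) + 2 * inner (e i) (B i (a1 - a2)))"
    unfolding sum_subtractf[symmetric] using pi by (intro sum.cong) auto
  then show ?thesis unfolding ell_def using px by argo
qed

lemma ell_diag: "ell d e d e = - 2 * (1/t * norm d^2 + (\<Sum>i<m. norm (e i)^2 / s i - 2 * inner (e i) (B i d)))"
  unfolding ell_def by (simp add: sum_distrib_left power2_norm_eq_inner algebra_simps)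

lemma unique_cluster:
  assumes r1: "strict_mono r1" "weakly_converges (\<lambda>n. x (r1 n)) x1" "\<forall>i<m. weakly_converges (\<lambda>n. v (r1 n) i) (v1 i)" "KKT x1 v1"
    and r2: "strict_mono r2" "weakly_converges (\<lambda>n. x (r2 n)) x2" "\<forall>i<m. weakly_converges (\<lambda>n. v (r2 n) i) (v2 i)" "KKT x2 v2"
  shows "x1 = x2"
proof -
  define d where "d = x1 - x2"
  define e where "e i = v1 i - v2 i" for i
  define K0 where "K0 = ((norm x1^2 - norm x2^2) / t + (\<Sum>i<m. (norm (v1 i)^2 - norm (v2 i)^2) / s i
        - 2 * inner (v1 i) (B i x1) + 2 * inner (v2 i) (B i x2)))"
  have eq: "ell d e (x k) (v k) = Wf x1 v1 k - Wf x2 v2 k - K0" for k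
    using W_diff[of x1 v1 k x2 v2] unfolding d_def e_def K0_def by simp
  obtain l1 l2 where l1: "(\<lambda>k. Wf x1 v1 k) \<longlonglongrightarrow> l1" and l2: "(\<lambda>k. Wf x2 v2 k) \<longlonglongrightarrow> l2"
    using W_conv[OF r1(4)] W_conv[OF r2(4)] unfolding convergent_def by blast
  have L: "(\<lambda>k. ell d e (x k) (v k)) \<longlonglongrightarrow> l1 - l2 - K0" unfolding eq by (intro tendsto_intros l1 l2)
  have A1: "(\<lambda>n. ell d e (x (r1 n)) (v (r1 n))) \<longlonglongrightarrow> ell d e x1 v1"
    by (rule ell_weak) (use r1 in auto)
  have B1: "(\<lambda>n. ell d e (x (r1 n)) (v (r1 n))) \<longlonglongrightarrow> l1 - l2 - K0"
    using LIMSEQ_subseq_LIMSEQ[OF L r1(1)] by (simp add: o_def)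
  have A2: "(\<lambda>n. ell d e (x (r2 n)) (v (r2 n))) \<longlonglongrightarrow> ell d e x2 v2"
    by (rule ell_weak) (use r2 in auto)
  have B2: "(\<lambda>n. ell d e (x (r2 n)) (v (r2 n))) \<longlonglongrightarrow> l1 - l2 - K0"
    using LIMSEQ_subseq_LIMSEQ[OF L r2(1)] by (simp add: o_def)
  have "ell d e x1 v1 = ell d e x2 v2" using LIMSEQ_unique[OF A1 B1] LIMSEQ_unique[OF A2 B2] by simp
  then have "ell d e d e = 0" using ell_self[of d e x1 v1 x2 v2] unfolding d_def e_def by simp
  then have Z: "1/t * norm d^2 + (\<Sum>i<m. norm (e i)^2 / s i - 2 * inner (e i) (B i d)) = 0"
    unfolding ell_diag by simp
  obtain \<epsilon> where E0: "\<epsilon> > 0" and E1: "\<And>dx dv. \<epsilon> * (norm dx^2 + (\<Sum>i<m. norm (dv i)^2))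
      \<le> 1/t * norm dx^2 + (\<Sum>i<m. norm (dv i)^2 / s i - 2 * inner (dv i) (B i dx))"
    using quadW by blast
  have E: "\<epsilon> * (norm d^2 + (\<Sum>i<m. norm (e i)^2)) \<le> 0" "\<epsilon> > 0"
    using E1[of d e] Z E0 by argo+
  have "0 \<le> (\<Sum>i<m. norm (e i)^2)" by (intro sum_nonneg) auto
  then have "norm d^2 + (\<Sum>i<m. norm (e i)^2) \<le> 0" using E by (simp add: mult_le_0_iff)
  then have "norm d^2 \<le> 0" using \<open>0 \<le> (\<Sum>i<m. norm (e i)^2)\<close> by argo
  then show ?thesis unfolding d_def by simp
qed

lemma x_weak: "\<exists>xs vs. KKT xs vs \<and> weakly_converges x xs"
proof -
  obtain r1 x1 v1 where c1: "strict_mono r1" "weakly_converges (\<lambda>n. x (id (r1 n))) x1"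
     "\<forall>i<m. weakly_converges (\<lambda>n. v (id (r1 n)) i) (v1 i)" "KKT x1 v1"
    using cluster_exists[OF strict_mono_id] by blast
  have w1: "weakly_converges (\<lambda>n. x (r1 n)) x1" using c1(2) by simp
  have w1v: "\<forall>i<m. weakly_converges (\<lambda>n. v (r1 n) i) (v1 i)" using c1(3) by simp
  have "weakly_converges x x1" unfolding weakly_converges_def
  proof (rule allI, rule ccontr)
    fix z assume nc: "\<not> (\<lambda>k. inner (x k) z) \<longlonglongrightarrow> inner x1 z"
    then obtain \<epsilon> where e: "\<epsilon> > 0" and inf: "\<forall>N. \<exists>n\<ge>N. \<not> dist (inner (x n) z) (inner x1 z) < \<epsilon>"
      unfolding lim_sequentially by blast
    define S where "S = {n. \<epsilon> \<le> dist (inner (x n) z) (inner x1 z)}"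
    have "\<forall>N. \<exists>n\<ge>N. n \<in> S"
    proof
      fix N
      obtain n where "n \<ge> N" "\<not> dist (inner (x n) z) (inner x1 z) < \<epsilon>" using inf by blast
      then show "\<exists>n\<ge>N. n \<in> S" unfolding S_def by (intro exI[of _ n]) simp
    qed
    then have "infinite S" by (simp add: infinite_nat_iff_unbounded_le)
    then obtain q :: "nat \<Rightarrow> nat" where q: "strict_mono q" "\<And>n. q n \<in> S" using infinite_enumerate by blast
    obtain r2 x2 v2 where c2: "strict_mono r2" "weakly_converges (\<lambda>n. x (q (r2 n))) x2"
      "\<forall>i<m. weakly_converges (\<lambda>n. v (q (r2 n)) i) (v2 i)" "KKT x2 v2"
      using cluster_exists[OF q(1)] by blast
    have qr: "strict_mono (q \<circ> r2)" using q(1) c2(1) by (rule strict_mono_o)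
    have w2: "weakly_converges (\<lambda>n. x ((q \<circ> r2) n)) x2" using c2(2) by (simp add: o_def)
    have w2v: "\<forall>i<m. weakly_converges (\<lambda>n. v ((q \<circ> r2) n) i) (v2 i)" using c2(3) by (simp add: o_def)
    have "x1 = x2" by (rule unique_cluster[OF c1(1) w1 w1v c1(4) qr w2 w2v c2(4)])
    then have "(\<lambda>n. inner (x (q (r2 n))) z) \<longlonglongrightarrow> inner x1 z" using c2(2) unfolding weakly_converges_def by blast
    then obtain N where N: "\<forall>n\<ge>N. dist (inner (x (q (r2 n))) z) (inner x1 z) < \<epsilon>"
      using e unfolding lim_sequentially by blast
    have 1: "dist (inner (x (q (r2 N))) z) (inner x1 z) < \<epsilon>" using N by blast
    have "q (r2 N) \<in> S" by (rule q(2))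
    then have 2: "\<epsilon> \<le> dist (inner (x (q (r2 N))) z) (inner x1 z)" unfolding S_def by simp
    show False using 1 2 by argo
  qed
  then show ?thesis using c1(4) by blast
qed

lemma KKT_min:
  assumes K: "KKT xs vs"
  shows "ereal (f xs) + g xs + (\<Sum>i<m. h i (B i xs)) \<le> ereal (f z) + g z + (\<Sum>i<m. h i (B i z))"
proof -
  have gs: "(- Df xs - (\<Sum>i<m. Bt i (vs i))) \<in> subdiff_on UNIV g xs" using K unfolding KKT_def by blast
  obtain G where G: "g xs = ereal G" using gs unfolding subdiff_on_def by (cases "g xs") auto
  have gz: "ereal (G + inner (- Df xs - (\<Sum>i<m. Bt i (vs i))) (z - xs)) \<le> g z"
    using gs G unfolding subdiff_on_def by auto
  have hs: "vs i \<in> subdiff_on (V i) (h i) (B i xs)" if "i < m" for i using K that unfolding KKT_def by blast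
  define H where "H i = real_of_ereal (h i (B i xs))" for i
  have H: "h i (B i xs) = ereal (H i)" if "i < m" for i
    using hs[OF that] unfolding subdiff_on_def H_def by (cases "h i (B i xs)") auto
  have hz: "ereal (H i + inner (vs i) (B i z - B i xs)) \<le> h i (B i z)" if i: "i < m" for i
    using hs[OF i] H[OF i] B_range[OF i] unfolding subdiff_on_def by auto
  have fz: "f xs + inner (Df xs) (z - xs) \<le> f z" by (rule grad_ineq[OF f_conv f_grad])
  have sumh: "ereal (\<Sum>i<m. H i + inner (vs i) (B i z - B i xs)) \<le> (\<Sum>i<m. h i (B i z))"
    unfolding sum_ereal[symmetric] using hz by (intro sum_mono) auto
  have sumH: "(\<Sum>i<m. h i (B i xs)) = ereal (\<Sum>i<m. H i)"
    unfolding sum_ereal[symmetric] using H by (intro sum.cong) auto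
  have lhs: "ereal (f xs) + g xs + (\<Sum>i<m. h i (B i xs)) = ereal (f xs + G + (\<Sum>i<m. H i))"
    unfolding G sumH by simp
  have "ereal (f xs + G + (\<Sum>i<m. H i))
      \<le> ereal (f z) + ereal (G + inner (- Df xs - (\<Sum>i<m. Bt i (vs i))) (z - xs)) + ereal (\<Sum>i<m. H i + inner (vs i) (B i z - B i xs))"
  proof -
    have e1: "inner (- Df xs - (\<Sum>i<m. Bt i (vs i))) (z - xs) = - inner (Df xs) (z - xs) - (\<Sum>i<m. inner (vs i) (B i (z - xs)))"
      by (simp add: inner_diff_left inner_sum_Bt)
    have e2: "(\<Sum>i<m. H i + inner (vs i) (B i z - B i xs)) = (\<Sum>i<m. H i) + (\<Sum>i<m. inner (vs i) (B i (z - xs)))"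
      by (simp add: sum.distrib B_diff)
    have "f xs + G + (\<Sum>i<m. H i) \<le> f z + (G + inner (- Df xs - (\<Sum>i<m. Bt i (vs i))) (z - xs)) + (\<Sum>i<m. H i + inner (vs i) (B i z - B i xs))"
      using fz e1 e2 by argo
    then show ?thesis by simp
  qed
  also have "\<dots> \<le> ereal (f z) + g z + (\<Sum>i<m. h i (B i z))"
    by (intro add_mono gz sumh order_refl)
  finally show ?thesis unfolding lhs .
qed

end

theorem theorem4p6:
  fixes f :: "'a::{real_inner,complete_space} \<Rightarrow> real"
    and Df :: "'a \<Rightarrow> 'a"
    and g :: "'a \<Rightarrow> ereal"
    and m :: nat
    and V :: "nat \<Rightarrow> 'b::{real_inner,complete_space} set"
    and h :: "nat \<Rightarrow> 'b \<Rightarrow> ereal"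
    and B :: "nat \<Rightarrow> 'a \<Rightarrow> 'b"
    and L \<gamma> \<sigma> \<tau> :: real
    and w :: "nat \<Rightarrow> real"
    and x :: "nat \<Rightarrow> 'a"
    and y :: "nat \<Rightarrow> nat \<Rightarrow> 'b"
  assumes f_conv: "convex_on UNIV f"
    and f_grad: "\<And>z. (f has_derivative (\<lambda>d. inner (Df z) d)) (at z)"
    and L_pos: "0 < L"
    and Df_lip: "\<And>u v. norm (Df u - Df v) \<le> L * norm (u - v)"
    and g_G0: "Gamma0_on UNIV g"
    and V_sub: "\<And>i. i < m \<Longrightarrow> subspace (V i) \<and> closed (V i)"
    and h_G0: "\<And>i. i < m \<Longrightarrow> Gamma0_on (V i) (h i)"
    and B_lin: "\<And>i. i < m \<Longrightarrow> bounded_linear (B i)"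
    and B_range: "\<And>i z. i < m \<Longrightarrow> B i z \<in> V i"
    and sol_exists: "\<exists>xh v u. v \<in> subdiff_on UNIV g xh
        \<and> (\<forall>i<m. u i \<in> subdiff_on (V i) (h i) (B i xh))
        \<and> Df xh + v + (\<Sum>i<m. adjoint (B i) (u i)) = 0"
    and w_range: "\<And>i. i < m \<Longrightarrow> 0 < w i \<and> w i < 1"
    and w_sum: "(\<Sum>i<m. w i) = 1"
    and gamma_range: "0 < \<gamma>" "\<gamma> < 2 / L"
    and sigma_pos: "0 < \<sigma>" and tau_pos: "0 < \<tau>"
    and step_cond: "\<sigma> * \<tau> * (\<Sum>i<m. w i * (onorm (B i))^2) < 1"
    and y0: "\<And>i. i < m \<Longrightarrow> y 0 i \<in> V i"
    and x_iter: "\<And>k. x (Suc k) = prox_on UNIV (\<tau> * \<gamma> / (1 + \<tau>)) g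
        ((1 / (1 + \<tau>)) *\<^sub>R (x k - \<tau> *\<^sub>R (\<Sum>i<m. w i *\<^sub>R adjoint (B i) (y k i))
            + \<tau> *\<^sub>R (x k - \<gamma> *\<^sub>R Df (x k))))"
    and y_iter: "\<And>k i. i < m \<Longrightarrow> y (Suc k) i = (\<gamma> / w i) *\<^sub>R
        prox_on (V i) (w i * \<sigma> / \<gamma>) (conj_on (V i) (h i))
          ((w i / \<gamma>) *\<^sub>R (y k i + \<sigma> *\<^sub>R B i (2 *\<^sub>R x (Suc k) - x k)))"
  shows "\<exists>xs. (\<forall>z. ereal (f xs) + g xs + (\<Sum>i<m. h i (B i xs))
                  \<le> ereal (f z) + g z + (\<Sum>i<m. h i (B i z)))
            \<and> weakly_converges x xs"
  proof -
  interpret cvsetup f Df g m V h B L \<gamma> \<sigma> \<tau> w x y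
    by (rule cvsetup.intro) (fact assms)+
  obtain xs vs where K: "KKT xs vs" and W: "weakly_converges x xs" using x_weak by blast
  show ?thesis using KKT_min[OF K] W by blast
qed

end
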